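(* Let $n\ge2$ and let $r$ be even with $0<r\le n$. Consider $A,B\in\mathrm{SGL}_n(\mathbb{F}_2)$ with $B-A=\sum_{i=1}^{r+1}\mathbf{x}_i\mathbf{x}_i^{\top}$, where $\mathbf{x}_1,\ldots,\mathbf{x}_r\in\mathbb{F}_2^n$ are linearly independent and $\mathbf{x}_{r+1}=\sum_{i=1}^r\mathbf{x}_i$. (i) Such $A,B,\mathbf{x}_1,\ldots,\mathbf{x}_r$ with $[\mathbf{x}_i^{\top}A^{-1}\mathbf{x}_j]_{i,j=1}^{r+1}$ not of rank one exist if and only if $(r,n)\notin\{(2,2),(2,3)\}$. (ii) Such $A,B,\mathbf{x}_1,\ldots,\mathbf{x}_r$ with $[\mathbf{x}_i^{\top}A^{-1}\mathbf{x}_j]_{i,j=1}^{r+1}$ of rank one exist if and only if $r\le\lfloor\frac{n+1}{2}\rfloor$.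
   Context: $\mathbb{F}_2$ is the binary field; $\mathrm{SGL}_n(\mathbb{F}_2)$ denotes the set of invertible symmetric $n\times n$ matrices over $\mathbb{F}_2$. *)

theory Defs
  imports "Jordan_Normal_Form.DL_Rank" "HOL-Library.Z2"
begin

text \<open>Matrices over the binary field are represented by Jordan_Normal_Form matrices
  with entries in the field type bit (HOL-Library.Z2).\<close>

definition SGL :: "nat \<Rightarrow> bit mat \<Rightarrow> bool" where
  "SGL n A \<longleftrightarrow> A \<in> carrier_mat n n \<and> transpose_mat A = A \<and> invertible_mat A"

text \<open>Linear independence of the family x_1,...,x_r (a list of vectors in F_2^n).\<close>
definition lin_indep_list :: "nat \<Rightarrow> bit vec list \<Rightarrow> bool" where
  "lin_indep_list n xs \<longleftrightarrow> set xs \<subseteq> carrier_vec n \<and> distinct xs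
      \<and> LinearCombinations.module.lin_indpt class_ring (module_vec TYPE(bit) n) (set xs)"

text \<open>The extended family x_1,...,x_r, x_{r+1} with x_{r+1} = x_1 + ... + x_r.\<close>
definition ext_family :: "nat \<Rightarrow> bit vec list \<Rightarrow> bit vec list" where
  "ext_family n xs = xs @ [vec n (\<lambda>k. \<Sum>i<length xs. (xs ! i) $ k)]"

text \<open>Sum of x_i x_i^T over a list of vectors.\<close>
definition sum_outer :: "nat \<Rightarrow> bit vec list \<Rightarrow> bit mat" where
  "sum_outer n ys = mat n n (\<lambda>(a, b). \<Sum>i<length ys. (ys ! i) $ a * (ys ! i) $ b)"

text \<open>The matrix [x_i^T A^{-1} x_j]_{i,j}, given the inverse Ainv of A.\<close>
definition gram :: "bit mat \<Rightarrow> bit vec list \<Rightarrow> bit mat" where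
  "gram Ainv ys = mat (length ys) (length ys) (\<lambda>(i, j). (ys ! i) \<bullet> (Ainv *\<^sub>v (ys ! j)))"

text \<open>The configuration of the lemma: A, B in SGL_n(F_2), x_1..x_r linearly independent,
  B - A = sum_{i=1}^{r+1} x_i x_i^T; Ainv is the inverse of A.\<close>
definition config :: "nat \<Rightarrow> nat \<Rightarrow> bit mat \<Rightarrow> bit mat \<Rightarrow> bit mat \<Rightarrow> bit vec list \<Rightarrow> bool" where
  "config n r A B Ainv xs \<longleftrightarrow> SGL n A \<and> SGL n B \<and> length xs = r \<and> lin_indep_list n xs
      \<and> B - A = sum_outer n (ext_family n xs)
      \<and> Ainv \<in> carrier_mat n n \<and> A * Ainv = 1\<^sub>m n \<and> Ainv * A = 1\<^sub>m n"

end

theory Submission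
  imports Defs
begin

(* ---- from L1.thy ---- *)
declare add_bit_eq_xor[simp del] mult_bit_eq_and[simp del]

definition lcf :: "nat \<Rightarrow> bit vec list \<Rightarrow> (nat \<Rightarrow> bit) \<Rightarrow> bit vec" where
  "lcf n vs c = vec n (\<lambda>i. \<Sum>j<length vs. c j * vs ! j $ i)"

definition indep :: "nat \<Rightarrow> bit vec list \<Rightarrow> bool" where
  "indep n vs \<longleftrightarrow> (\<forall>c. lcf n vs c = 0\<^sub>v n \<longrightarrow> (\<forall>j<length vs. c j = 0))"

lemma bit_cases2: "(x::bit) = 0 \<or> x = 1" by (cases x) auto

lemma mat_of_cols_mult_lcf:
  assumes "b \<in> carrier_vec (length vs)"
  shows "mat_of_cols n vs *\<^sub>v b = lcf n vs (\<lambda>j. b $ j)"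
proof (rule eq_vecI)
  show "dim_vec (mat_of_cols n vs *\<^sub>v b) = dim_vec (lcf n vs (\<lambda>j. b $ j))"
    by (simp add: lcf_def)
  fix i assume "i < dim_vec (lcf n vs (\<lambda>j. b $ j))"
  then have i: "i < n" by (simp add: lcf_def)
  have "(mat_of_cols n vs *\<^sub>v b) $ i = (\<Sum>j<length vs. vs ! j $ i * b $ j)"
    using i assms by (simp add: mult_mat_vec_def scalar_prod_def mat_of_cols_index atLeast0LessThan
        row_def)
  then show "(mat_of_cols n vs *\<^sub>v b) $ i = lcf n vs (\<lambda>j. b $ j) $ i"
    using i by (simp add: lcf_def mult.commute)
qed

lemma indep_imp_lin_indpt:
  assumes vs: "set vs \<subseteq> carrier_vec n" and d: "distinct vs" and ind: "indep n vs"
  shows "LinearCombinations.module.lin_indpt class_ring (module_vec TYPE(bit) n) (set vs)"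
proof (rule ccontr)
  interpret V: vec_space "TYPE(bit)" n .
  assume "\<not> ?thesis"
  then have ld: "V.lin_dep (set (cols (mat_of_cols n vs)))" using vs by simp
  obtain v where v: "v \<in> carrier_vec (length vs)" "v \<noteq> 0\<^sub>v (length vs)"
     "mat_of_cols n vs *\<^sub>v v = 0\<^sub>v n"
    using V.lin_depE[OF mat_of_cols_carrier(1) ld] d vs by auto
  have "lcf n vs (\<lambda>j. v $ j) = 0\<^sub>v n" using v mat_of_cols_mult_lcf by metis
  then have "\<forall>j<length vs. v $ j = 0" using ind unfolding indep_def by blast
  then have "v = 0\<^sub>v (length vs)" using v(1) by (intro eq_vecI) auto
  then show False using v(2) by simp
qed

lemma lin_indpt_imp_indep:
  assumes vs: "set vs \<subseteq> carrier_vec n" and d: "distinct vs"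
    and li: "LinearCombinations.module.lin_indpt class_ring (module_vec TYPE(bit) n) (set vs)"
  shows "indep n vs"
  unfolding indep_def
proof (intro allI impI)
  interpret V: vec_space "TYPE(bit)" n .
  fix c j assume c: "lcf n vs c = 0\<^sub>v n" and j: "j < length vs"
  show "c j = 0"
  proof (rule ccontr)
    assume cj: "c j \<noteq> 0"
    define v where "v = vec (length vs) c"
    have "v \<in> carrier_vec (length vs)" by (simp add: v_def)
    moreover have "v \<noteq> 0\<^sub>v (length vs)"
    proof
      assume "v = 0\<^sub>v (length vs)"
      then have "v $ j = 0" using j by simp
      then show False using cj j by (simp add: v_def)
    qed
    moreover have "mat_of_cols n vs *\<^sub>v v = 0\<^sub>v n"
    proof -
      have "lcf n vs (\<lambda>j. v $ j) = lcf n vs c"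
        unfolding lcf_def v_def by (intro eq_vecI) auto
      then show ?thesis using c mat_of_cols_mult_lcf[of v vs n] by (simp add: v_def)
    qed
    ultimately have "V.lin_dep (set (cols (mat_of_cols n vs)))"
      using V.lin_depI[OF mat_of_cols_carrier(1), of v vs] d vs by simp
    then show False using li vs by simp
  qed
qed

lemma indep_distinct:
  assumes ind: "indep n vs" shows "distinct vs"
proof (rule ccontr)
  assume "\<not> distinct vs"
  then obtain i j where ij: "i < length vs" "j < length vs" "i \<noteq> j" "vs ! i = vs ! j"
    by (metis distinct_conv_nth)
  define c where "c = (\<lambda>k. if k = i \<or> k = j then (1::bit) else 0)"
  have "lcf n vs c = 0\<^sub>v n"
  proof (rule eq_vecI)
    fix a assume "a < dim_vec (0\<^sub>v n :: bit vec)"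
    then have a: "a < n" by simp
    have "(\<Sum>k<length vs. c k * vs ! k $ a) = (\<Sum>k\<in>{i,j}. c k * vs ! k $ a)"
      by (rule sum.mono_neutral_right) (use ij in \<open>auto simp: c_def\<close>)
    also have "\<dots> = 0" using ij by (simp add: c_def)
    finally show "lcf n vs c $ a = 0\<^sub>v n $ a" using a by (simp add: lcf_def)
  qed (simp add: lcf_def)
  then have "c i = 0" using ind ij unfolding indep_def by blast
  then show False by (simp add: c_def)
qed

lemma indep_length_le:
  assumes vs: "set vs \<subseteq> carrier_vec d" and ind: "indep d vs"
  shows "length vs \<le> d"
proof -
  interpret V: vec_space "TYPE(bit)" d .
  have dist: "distinct vs" using indep_distinct[OF ind] .
  have li: "V.lin_indpt (set vs)" using indep_imp_lin_indpt[OF vs dist ind] by simp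
  have "card (set vs) \<le> V.dim" using V.li_le_dim(2)[OF V.fin_dim _ li] vs by simp
  then show ?thesis using V.dim_is_n distinct_card[OF dist] by simp
qed

lemma lcf_carrier[simp]: "lcf n vs c \<in> carrier_vec n" "dim_vec (lcf n vs c) = n"
  by (auto simp: lcf_def)

lemma lcf_index: "a < n \<Longrightarrow> lcf n vs c $ a = (\<Sum>j<length vs. c j * vs ! j $ a)"
  by (simp add: lcf_def)

lemma scalar_lcf:
  assumes "v \<in> carrier_vec n" and zs: "set zs \<subseteq> carrier_vec n"
  shows "v \<bullet> lcf n zs d = (\<Sum>k<length zs. d k * (v \<bullet> zs ! k))"
proof -
  have "v \<bullet> lcf n zs d = (\<Sum>a<n. v $ a * (\<Sum>k<length zs. d k * zs ! k $ a))"
    using assms by (simp add: scalar_prod_def lcf_def atLeast0LessThan)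
  also have "\<dots> = (\<Sum>a<n. \<Sum>k<length zs. d k * (v $ a * zs ! k $ a))"
    by (simp add: sum_distrib_left mult.left_commute)
  also have "\<dots> = (\<Sum>k<length zs. \<Sum>a<n. d k * (v $ a * zs ! k $ a))"
    by (rule sum.swap)
  also have "\<dots> = (\<Sum>k<length zs. d k * (v \<bullet> zs ! k))"
  proof (intro sum.cong refl)
    fix k assume "k \<in> {..<length zs}"
    then have "dim_vec (zs ! k) = n" using zs by (metis carrier_vecD lessThan_iff nth_mem subsetD)
    then show "(\<Sum>a<n. d k * (v $ a * zs ! k $ a)) = d k * (v \<bullet> zs ! k)"
      by (simp add: scalar_prod_def sum_distrib_left atLeast0LessThan)
  qed
  finally show ?thesis .
qed

lemma lcf_append1:
  "lcf n (vs @ [u]) c = lcf n vs c + c (length vs) \<cdot>\<^sub>v vec n (\<lambda>a. u $ a)"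
proof (rule eq_vecI)
  fix a assume "a < dim_vec (lcf n vs c + c (length vs) \<cdot>\<^sub>v vec n (\<lambda>a. u $ a))"
  then have a: "a < n" by simp
  have "(\<Sum>j<length (vs @ [u]). c j * (vs @ [u]) ! j $ a) = (\<Sum>j<length vs. c j * vs ! j $ a) + c (length vs) * u $ a"
    by (simp add: nth_append)
  then show "lcf n (vs @ [u]) c $ a = (lcf n vs c + c (length vs) \<cdot>\<^sub>v vec n (\<lambda>a. u $ a)) $ a"
    using a by (simp add: lcf_def)
qed simp

lemma lcf_lin:
  "lcf n vs (\<lambda>j. \<Sum>i<m. d i * c i j) = vec n (\<lambda>a. \<Sum>i<m. d i * lcf n vs (c i) $ a)"
proof (rule eq_vecI)
  fix a assume "a < dim_vec (vec n (\<lambda>a. \<Sum>i<m. d i * lcf n vs (c i) $ a))"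
  then have a: "a < n" by simp
  have L: "lcf n vs (\<lambda>j. \<Sum>i<m. d i * c i j) $ a = (\<Sum>j<length vs. (\<Sum>i<m. d i * c i j) * vs ! j $ a)"
    using a by (simp add: lcf_def)
  have R: "vec n (\<lambda>a. \<Sum>i<m. d i * lcf n vs (c i) $ a) $ a = (\<Sum>i<m. d i * (\<Sum>j<length vs. c i j * vs ! j $ a))"
    using a by (simp add: lcf_def)
  have "(\<Sum>j<length vs. (\<Sum>i<m. d i * c i j) * vs ! j $ a)
      = (\<Sum>j<length vs. \<Sum>i<m. d i * (c i j * vs ! j $ a))"
    by (simp add: sum_distrib_right mult.assoc)
  also have "\<dots> = (\<Sum>i<m. \<Sum>j<length vs. d i * (c i j * vs ! j $ a))" by (rule sum.swap)
  also have "\<dots> = (\<Sum>i<m. d i * (\<Sum>j<length vs. c i j * vs ! j $ a))"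
    by (simp add: sum_distrib_left)
  finally show "lcf n vs (\<lambda>j. \<Sum>i<m. d i * c i j) $ a = vec n (\<lambda>a. \<Sum>i<m. d i * lcf n vs (c i) $ a) $ a"
    unfolding L R .
qed simp

lemma bit_eq_iff_add: "(x::bit) + y = 0 \<longleftrightarrow> x = y"
  by (cases x; cases y) auto

lemma not_spanning:
  assumes vs: "set vs \<subseteq> carrier_vec n" and len: "length vs < n"
  shows "\<exists>u\<in>carrier_vec n. \<forall>c. lcf n vs c \<noteq> u"
proof (rule ccontr)
  assume "\<not> ?thesis"
  then have all: "\<forall>u\<in>carrier_vec n. \<exists>c. lcf n vs c = u" by blast
  have "\<forall>i<n. \<exists>c. lcf n vs c = unit_vec n i"
  proof (intro allI impI)
    fix i assume "i < n"
    show "\<exists>c. lcf n vs c = unit_vec n i" using all unit_vec_carrier[of n i] by blast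
  qed
  define C where "C i = (SOME c. lcf n vs c = unit_vec n i)" for i
  have C: "lcf n vs (C i) = unit_vec n i" if "i < n" for i
  proof -
    have "\<exists>c. lcf n vs c = unit_vec n i" using \<open>\<forall>i<n. \<exists>c. lcf n vs c = unit_vec n i\<close> that by blast
    from someI_ex[OF this] show ?thesis unfolding C_def .
  qed
  define m where "m = length vs"
  define ys where "ys = map (\<lambda>i. vec m (C i)) [0..<n]"
  have ys_c: "set ys \<subseteq> carrier_vec m" unfolding ys_def by auto
  have "indep m ys" unfolding indep_def
  proof (intro allI impI)
    fix d i assume d: "lcf m ys d = 0\<^sub>v m" and i: "i < length ys"
    have dj: "(\<Sum>k<n. d k * C k j) = 0" if j: "j < m" for j
    proof -
      have "lcf m ys d $ j = 0" using d j by simp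
      then show ?thesis using j by (simp add: lcf_def ys_def)
    qed
    have "lcf n vs (\<lambda>j. \<Sum>k<n. d k * C k j) = lcf n vs (\<lambda>j. 0)"
      unfolding lcf_def m_def[symmetric]
      by (intro arg_cong[where f="vec n"] ext sum.cong refl) (simp add: dj)
    also have "\<dots> = 0\<^sub>v n" by (intro eq_vecI) (auto simp: lcf_def)
    finally have z: "vec n (\<lambda>a. \<Sum>k<n. d k * lcf n vs (C k) $ a) = 0\<^sub>v n"
      unfolding lcf_lin .
    have "i < n" using i by (simp add: ys_def)
    have "(\<Sum>k<n. d k * lcf n vs (C k) $ i) = (\<Sum>k<n. d k * unit_vec n k $ i)"
      using \<open>i < n\<close> by (intro sum.cong) (auto simp: C)
    also have "\<dots> = (\<Sum>k<n. if k = i then d k else 0)"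
      using \<open>i < n\<close> by (intro sum.cong) (auto simp: unit_vec_def)
    also have "\<dots> = d i" using \<open>i < n\<close> by (simp add: sum.delta)
    finally have e: "(\<Sum>k<n. d k * lcf n vs (C k) $ i) = d i" .
    have "vec n (\<lambda>a. \<Sum>k<n. d k * lcf n vs (C k) $ a) $ i = 0"
      using z \<open>i < n\<close> by simp
    then show "d i = 0" using e \<open>i < n\<close> by simp
  qed
  then have "length ys \<le> m" using indep_length_le ys_c by blast
  moreover have "length ys = n" unfolding ys_def by simp
  ultimately show False using len m_def by simp
qed

lemma extend_indep:
  assumes "set vs \<subseteq> carrier_vec n" "indep n vs" "length vs \<le> n"
  shows "\<exists>es. set es \<subseteq> carrier_vec n \<and> length vs + length es = n \<and> indep n (vs @ es)"
  using assms
proof (induction "n - length vs" arbitrary: vs)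
  case 0
  then show ?case by (intro exI[of _ "[]"]) auto
next
  case (Suc k)
  then have len: "length vs < n" by simp
  obtain u where u: "u \<in> carrier_vec n" "\<And>c. lcf n vs c \<noteq> u"
    using not_spanning[OF Suc.prems(1) len] by blast
  have uvec: "vec n (\<lambda>a. u $ a) = u" using u(1) by (intro eq_vecI) auto
  have ind: "indep n (vs @ [u])" unfolding indep_def
  proof (intro allI impI)
    fix c j assume c: "lcf n (vs @ [u]) c = 0\<^sub>v n" and j: "j < length (vs @ [u])"
    have c': "lcf n vs c + c (length vs) \<cdot>\<^sub>v u = 0\<^sub>v n" using c unfolding lcf_append1 uvec .
    have cl: "c (length vs) = 0"
    proof (rule ccontr)
      assume "c (length vs) \<noteq> 0"
      then have "c (length vs) = 1" by simp
      then have "lcf n vs c + u = 0\<^sub>v n" using c' u(1) by simp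
      then have h: "lcf n vs c + u = 0\<^sub>v n" .
      have "lcf n vs c = u"
      proof (intro eq_vecI)
        fix i assume "i < dim_vec u"
        then have i: "i < n" using u(1) by simp
        have "(lcf n vs c + u) $ i = 0" using h i by simp
        then show "lcf n vs c $ i = u $ i" using i u(1) by (simp add: bit_eq_iff_add)
      qed (use u(1) in simp)
      then show False using u(2) by blast
    qed
    have "0 \<cdot>\<^sub>v u = 0\<^sub>v n" using u(1) by (intro eq_vecI) auto
    then have "lcf n vs c = 0\<^sub>v n" using c' u(1) cl by simp
    then have "\<forall>j<length vs. c j = 0" using Suc.prems(2) unfolding indep_def by blast
    then show "c j = 0" using cl j by (metis length_append_singleton less_Suc_eq)
  qed
  have kk: "k = n - length (vs @ [u])" using Suc.hyps(2) by simp
  have c2: "set (vs @ [u]) \<subseteq> carrier_vec n" using Suc.prems(1) u(1) by auto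
  have l2: "length (vs @ [u]) \<le> n" using len by simp
  obtain es where es: "set es \<subseteq> carrier_vec n" "length (vs @ [u]) + length es = n"
    "indep n ((vs @ [u]) @ es)" using Suc.hyps(1)[OF kk c2 ind l2] by blast
  have 1: "set (u # es) \<subseteq> carrier_vec n" using es(1) u(1) by simp
  have 2: "length vs + length (u # es) = n" using es(2) by simp
  have 3: "indep n (vs @ (u # es))" using es(3) by simp
  show ?case using 1 2 3 by blast
qed

lemma indep_mat_inj:
  assumes "indep n vs" "v \<in> carrier_vec (length vs)" "mat_of_cols n vs *\<^sub>v v = 0\<^sub>v n"
  shows "v = 0\<^sub>v (length vs)"
proof -
  have "lcf n vs (\<lambda>j. v $ j) = 0\<^sub>v n" using assms(2,3) mat_of_cols_mult_lcf by metis
  then have "\<forall>j<length vs. v $ j = 0" using assms(1) unfolding indep_def by blast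
  then show ?thesis using assms(2) by (intro eq_vecI) auto
qed

lemma inj_det_nz:
  assumes P: "(P :: bit mat) \<in> carrier_mat n n"
    and inj: "\<And>v. v \<in> carrier_vec n \<Longrightarrow> P *\<^sub>v v = 0\<^sub>v n \<Longrightarrow> v = 0\<^sub>v n"
  shows "det P \<noteq> 0"
  using det_0_iff_vec_prod_zero_field[OF P] inj by blast

lemma det_nz_inj:
  assumes P: "(P :: bit mat) \<in> carrier_mat n n" and "det P \<noteq> 0"
    and "v \<in> carrier_vec n" "P *\<^sub>v v = 0\<^sub>v n"
  shows "v = 0\<^sub>v n"
  using det_0_iff_vec_prod_zero_field[OF P] assms by blast

lemma iso:
  assumes xs: "set xs \<subseteq> carrier_vec n" and zs: "set zs \<subseteq> carrier_vec n"
    and ix: "indep n xs" and iz: "indep n zs"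
    and orth: "\<And>i k. i < length xs \<Longrightarrow> k < length zs \<Longrightarrow> xs ! i \<bullet> zs ! k = 0"
  shows "length xs + length zs \<le> n"
proof -
  have lx: "length xs \<le> n" using indep_length_le[OF xs ix] .
  obtain es where es: "set es \<subseteq> carrier_vec n" "length xs + length es = n" "indep n (xs @ es)"
    using extend_indep[OF xs ix lx] by blast
  define L where "L = xs @ es"
  have L: "set L \<subseteq> carrier_vec n" "length L = n" "indep n L" using es xs by (auto simp: L_def)
  define P where "P = mat_of_cols n L"
  have P: "P \<in> carrier_mat n n" using mat_of_cols_carrier(1)[of n L] L(2) unfolding P_def by metis
  have "det P \<noteq> 0"
    using inj_det_nz[OF P] indep_mat_inj[OF L(3)] L(2) by (simp add: P_def)
  then have dT: "det (transpose_mat P) \<noteq> 0" using det_transpose[OF P] by simp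
  have PT: "transpose_mat P \<in> carrier_mat n n" using P by simp
  define ws where "ws = map (\<lambda>k. vec (length es) (\<lambda>a. es ! a \<bullet> zs ! k)) [0..<length zs]"
  have ws_c: "set ws \<subseteq> carrier_vec (length es)" unfolding ws_def by auto
  have "indep (length es) ws" unfolding indep_def
  proof (intro allI impI)
    fix d k assume d: "lcf (length es) ws d = 0\<^sub>v (length es)" and k: "k < length ws"
    define z where "z = lcf n zs d"
    have z_es: "es ! a \<bullet> z = 0" if a: "a < length es" for a
    proof -
      have ea: "es ! a \<in> carrier_vec n" using es(1) a by (metis nth_mem subsetD)
      have "es ! a \<bullet> z = (\<Sum>k<length zs. d k * (es ! a \<bullet> zs ! k))"
        unfolding z_def by (rule scalar_lcf[OF ea zs])
      also have "\<dots> = lcf (length es) ws d $ a"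
        using a by (simp add: lcf_def ws_def)
      also have "\<dots> = 0" using d a by simp
      finally show ?thesis .
    qed
    have z_xs: "xs ! i \<bullet> z = 0" if i: "i < length xs" for i
    proof -
      have xa: "xs ! i \<in> carrier_vec n" using xs i by (metis nth_mem subsetD)
      have "xs ! i \<bullet> z = (\<Sum>k<length zs. d k * (xs ! i \<bullet> zs ! k))"
        unfolding z_def by (rule scalar_lcf[OF xa zs])
      also have "\<dots> = 0" using orth i by simp
      finally show ?thesis .
    qed
    have "transpose_mat P *\<^sub>v z = 0\<^sub>v n"
    proof (rule eq_vecI)
      fix j assume "j < dim_vec (0\<^sub>v n :: bit vec)"
      then have j: "j < n" by simp
      have Lj: "L ! j \<in> carrier_vec n" using L j by (metis nth_mem subsetD)
      have "(transpose_mat P *\<^sub>v z) $ j = row (transpose_mat P) j \<bullet> z"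
        using j P by simp
      also have "row (transpose_mat P) j = col P j" using j P by simp
      also have "col P j = L ! j" unfolding P_def using col_mat_of_cols[OF _ Lj] j L(2) by simp
      also have "L ! j \<bullet> z = 0"
      proof (cases "j < length xs")
        case True
        then show ?thesis using z_xs by (simp add: L_def nth_append)
      next
        case False
        then show ?thesis using z_es[of "j - length xs"] j es(2) by (simp add: L_def nth_append)
      qed
      finally show "(transpose_mat P *\<^sub>v z) $ j = 0\<^sub>v n $ j" using j by simp
    qed (use P in simp)
    then have "z = 0\<^sub>v n" using det_nz_inj[OF PT dT] by (simp add: z_def)
    then have "\<forall>k<length zs. d k = 0" using iz unfolding indep_def z_def by blast
    then show "d k = 0" using k by (simp add: ws_def)
  qed
  then have "length ws \<le> length es" using indep_length_le[OF ws_c] by blast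
  then show ?thesis using es(2) by (simp add: ws_def)
qed

(* ---- from L2.thy ---- *)
lemma of_nat_even_bit: "even r \<Longrightarrow> (of_nat r :: bit) = 0"
  by (elim evenE) simp

lemma bit_add_self[simp]: "(x::bit) + x = 0" by (cases x) auto
lemma bit_mult_self[simp]: "(x::bit) * x = x" by (cases x) auto

lemma sym_inv:
  fixes A S :: "bit mat"
  assumes A: "A \<in> carrier_mat n n" and S: "S \<in> carrier_mat n n"
    and At: "transpose_mat A = A" and AS: "A * S = 1\<^sub>m n"
  shows "transpose_mat S = S"
proof -
  have St: "transpose_mat S \<in> carrier_mat n n" using S by simp
  have 1: "transpose_mat S * 1\<^sub>m n = transpose_mat S" using St by (simp add: carrier_matD)
  have 2: "(transpose_mat S * A) * S = transpose_mat S * (A * S)" by (rule assoc_mult_mat[OF St A S])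
  have 3: "transpose_mat (A * S) = transpose_mat S * transpose_mat A" by (rule transpose_mult[OF A S])
  have "transpose_mat S * A = 1\<^sub>m n" using 3 At AS by simp
  then have "S = transpose_mat S * (A * S)" using 2 left_mult_one_mat[OF S] by simp
  then show ?thesis using 1 AS by simp
qed

lemma sum_outer_mult:
  assumes ys: "set ys \<subseteq> carrier_vec n" and w: "w \<in> carrier_vec n"
  shows "sum_outer n ys *\<^sub>v w = lcf n ys (\<lambda>i. ys ! i \<bullet> w)"
proof (rule eq_vecI)
  fix a assume "a < dim_vec (lcf n ys (\<lambda>i. ys ! i \<bullet> w))"
  then have a: "a < n" by simp
  have dy: "dim_vec (ys ! i) = n" if "i < length ys" for i
    using ys that by (metis carrier_vecD nth_mem subsetD)
  have "(sum_outer n ys *\<^sub>v w) $ a = (\<Sum>b<n. (\<Sum>i<length ys. ys ! i $ a * ys ! i $ b) * w $ b)"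
    using a w by (simp add: sum_outer_def mult_mat_vec_def scalar_prod_def row_def atLeast0LessThan)
  also have "\<dots> = (\<Sum>b<n. \<Sum>i<length ys. ys ! i $ a * (ys ! i $ b * w $ b))"
    by (simp add: sum_distrib_right mult.assoc)
  also have "\<dots> = (\<Sum>i<length ys. \<Sum>b<n. ys ! i $ a * (ys ! i $ b * w $ b))" by (rule sum.swap)
  also have "\<dots> = (\<Sum>i<length ys. (ys ! i \<bullet> w) * ys ! i $ a)"
  proof (intro sum.cong refl)
    fix i assume "i \<in> {..<length ys}"
    then have "dim_vec (ys ! i) = n" using dy by simp
    have "(\<Sum>b<n. ys ! i $ a * (ys ! i $ b * w $ b)) = ys ! i $ a * (\<Sum>b<n. ys ! i $ b * w $ b)"
      by (simp add: sum_distrib_left)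
    also have "(\<Sum>b<n. ys ! i $ b * w $ b) = ys ! i \<bullet> w"
      using w by (simp add: scalar_prod_def atLeast0LessThan)
    finally show "(\<Sum>b<n. ys ! i $ a * (ys ! i $ b * w $ b)) = (ys ! i \<bullet> w) * ys ! i $ a"
      by (simp add: mult.commute)
  qed
  also have "\<dots> = lcf n ys (\<lambda>i. ys ! i \<bullet> w) $ a" using a by (simp add: lcf_def)
  finally show "(sum_outer n ys *\<^sub>v w) $ a = lcf n ys (\<lambda>i. ys ! i \<bullet> w) $ a" .
qed (simp add: sum_outer_def)

lemma ext_last: "vec n (\<lambda>k. \<Sum>i<length xs. xs ! i $ k) = lcf n xs (\<lambda>_. 1)"
  by (simp add: lcf_def)

lemma ext_family_eq: "ext_family n xs = xs @ [lcf n xs (\<lambda>_. 1)]"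
  by (simp add: ext_family_def ext_last)

lemma lcf_append_lcf:
  "lcf n (xs @ [lcf n xs d]) c = lcf n xs (\<lambda>i. c i + c (length xs) * d i)"
proof (rule eq_vecI)
  fix a assume "a < dim_vec (lcf n xs (\<lambda>i. c i + c (length xs) * d i))"
  then have a: "a < n" by simp
  have "lcf n (xs @ [lcf n xs d]) c $ a = (\<Sum>j<length xs. c j * xs ! j $ a) + c (length xs) * (\<Sum>j<length xs. d j * xs ! j $ a)"
    using a by (simp add: lcf_def nth_append)
  also have "\<dots> = (\<Sum>j<length xs. (c j + c (length xs) * d j) * xs ! j $ a)"
    by (simp add: sum_distrib_left distrib_right sum.distrib mult.assoc)
  finally show "lcf n (xs @ [lcf n xs d]) c $ a = lcf n xs (\<lambda>i. c i + c (length xs) * d i) $ a"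
    using a by (simp add: lcf_def)
qed simp

lemma mat_lcf:
  assumes S: "S \<in> carrier_mat n n" and xs: "set xs \<subseteq> carrier_vec n"
  shows "S *\<^sub>v lcf n xs c = lcf n (map (\<lambda>x. S *\<^sub>v x) xs) c"
proof (rule eq_vecI)
  fix a assume "a < dim_vec (lcf n (map (\<lambda>x. S *\<^sub>v x) xs) c)"
  then have a: "a < n" by simp
  have ra: "row S a \<in> carrier_vec n" using S a by simp
  have "(S *\<^sub>v lcf n xs c) $ a = row S a \<bullet> lcf n xs c" using S a by simp
  also have "\<dots> = (\<Sum>k<length xs. c k * (row S a \<bullet> xs ! k))" by (rule scalar_lcf[OF ra xs])
  also have "\<dots> = lcf n (map (\<lambda>x. S *\<^sub>v x) xs) c $ a" using a S by (simp add: lcf_def)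
  finally show "(S *\<^sub>v lcf n xs c) $ a = lcf n (map (\<lambda>x. S *\<^sub>v x) xs) c $ a" .
qed (use S in simp)

lemma lcf_scalar_left:
  assumes u: "u \<in> carrier_vec n" and xs: "set xs \<subseteq> carrier_vec n"
  shows "lcf n xs c \<bullet> u = (\<Sum>k<length xs. c k * (xs ! k \<bullet> u))"
proof -
  have "lcf n xs c \<bullet> u = u \<bullet> lcf n xs c" by (rule comm_scalar_prod[OF lcf_carrier(1) u])
  also have "\<dots> = (\<Sum>k<length xs. c k * (u \<bullet> xs ! k))" by (rule scalar_lcf[OF u xs])
  also have "\<dots> = (\<Sum>k<length xs. c k * (xs ! k \<bullet> u))"
    using xs u by (intro sum.cong refl) (metis comm_scalar_prod lessThan_iff nth_mem subsetD)
  finally show ?thesis .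
qed

lemma bil_lcf_right:
  assumes S: "S \<in> carrier_mat n n" and xs: "set xs \<subseteq> carrier_vec n" and u: "u \<in> carrier_vec n"
  shows "u \<bullet> (S *\<^sub>v lcf n xs c) = (\<Sum>k<length xs. c k * (u \<bullet> (S *\<^sub>v xs ! k)))"
proof -
  have c: "set (map (\<lambda>x. S *\<^sub>v x) xs) \<subseteq> carrier_vec n"
  proof
    fix y assume "y \<in> set (map (\<lambda>x. S *\<^sub>v x) xs)"
    then obtain x where "x \<in> set xs" "y = S *\<^sub>v x" by auto
    then show "y \<in> carrier_vec n" using S xs mult_mat_vec_carrier by blast
  qed
  have "u \<bullet> (S *\<^sub>v lcf n xs c) = u \<bullet> lcf n (map (\<lambda>x. S *\<^sub>v x) xs) c"
    by (simp only: mat_lcf[OF S xs])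
  also have "\<dots> = (\<Sum>k<length (map (\<lambda>x. S *\<^sub>v x) xs). c k * (u \<bullet> map (\<lambda>x. S *\<^sub>v x) xs ! k))"
    by (rule scalar_lcf[OF u c])
  also have "\<dots> = (\<Sum>k<length xs. c k * (u \<bullet> (S *\<^sub>v xs ! k)))"
  proof (rule sum.cong)
    show "{..<length (map (\<lambda>x. S *\<^sub>v x) xs)} = {..<length xs}" by simp
  next
    fix k assume "k \<in> {..<length xs}"
    then show "c k * (u \<bullet> map (\<lambda>x. S *\<^sub>v x) xs ! k) = c k * (u \<bullet> (S *\<^sub>v xs ! k))" by simp
  qed
  finally show ?thesis .
qed

(* ---- from L3.thy ---- *)

definition Gm :: "bit mat \<Rightarrow> bit vec list \<Rightarrow> nat \<Rightarrow> nat \<Rightarrow> bit" where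
  "Gm S xs i j = xs ! i \<bullet> (S *\<^sub>v xs ! j)"

definition Gext :: "(nat \<Rightarrow> nat \<Rightarrow> bit) \<Rightarrow> nat \<Rightarrow> nat \<Rightarrow> nat \<Rightarrow> bit" where
  "Gext G r i j = (if i < r \<and> j < r then G i j else if i < r then (\<Sum>l<r. G i l)
     else if j < r then (\<Sum>k<r. G k j) else (\<Sum>k<r. \<Sum>l<r. G k l))"

lemma nth_carrier: "set xs \<subseteq> carrier_vec n \<Longrightarrow> i < length xs \<Longrightarrow> xs ! i \<in> carrier_vec n"
  by (metis nth_mem subsetD)

lemma lcf_cong: "(\<And>i. i < length xs \<Longrightarrow> c i = d i) \<Longrightarrow> lcf n xs c = lcf n xs d"
  unfolding lcf_def by (intro arg_cong[where f="vec n"] ext sum.cong refl) simp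

lemma gram_entry:
  assumes S: "S \<in> carrier_mat n n" and xs: "set xs \<subseteq> carrier_vec n" and r: "length xs = r"
    and i: "i \<le> r" and j: "j \<le> r"
  shows "gram S (ext_family n xs) $$ (i, j) = Gext (Gm S xs) r i j"
proof -
  define s where "s = lcf n xs (\<lambda>_. 1)"
  have ys: "ext_family n xs = xs @ [s]" by (simp add: ext_family_eq s_def)
  have len: "length (ext_family n xs) = Suc r" using ys r by simp
  have yi: "ext_family n xs ! k = (if k < r then xs ! k else s)" if "k \<le> r" for k
    using that ys r by (simp add: nth_append)
  have g: "gram S (ext_family n xs) $$ (i, j) = ext_family n xs ! i \<bullet> (S *\<^sub>v ext_family n xs ! j)"
    using i j len by (simp add: gram_def)
  have sc: "s \<in> carrier_vec n" by (simp add: s_def)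
  have Sxc: "S *\<^sub>v xs ! k \<in> carrier_vec n" if "k < r" for k
    using S nth_carrier[OF xs] that r mult_mat_vec_carrier by metis
  show ?thesis
  proof (cases "i < r")
    case iT: True
    show ?thesis
    proof (cases "j < r")
      case True
      then show ?thesis using g yi i j iT by (simp add: Gext_def Gm_def)
    next
      case False
      then have "j = r" using j by simp
      then have "gram S (ext_family n xs) $$ (i, j) = xs ! i \<bullet> (S *\<^sub>v s)" using g yi iT by simp
      also have "\<dots> = (\<Sum>k<length xs. 1 * (xs ! i \<bullet> (S *\<^sub>v xs ! k)))"
        unfolding s_def by (rule bil_lcf_right[OF S xs nth_carrier[OF xs]]) (use iT r in simp)
      finally show ?thesis using iT False r by (simp add: Gext_def Gm_def)
    qed
  next
    case iF: False
    then have ir: "i = r" using i by simp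
    show ?thesis
    proof (cases "j < r")
      case True
      have "gram S (ext_family n xs) $$ (i, j) = s \<bullet> (S *\<^sub>v xs ! j)" using g yi ir True by simp
      also have "\<dots> = (\<Sum>k<length xs. 1 * (xs ! k \<bullet> (S *\<^sub>v xs ! j)))"
        unfolding s_def by (rule lcf_scalar_left[OF Sxc[OF True] xs])
      finally show ?thesis using iF True r by (simp add: Gext_def Gm_def)
    next
      case False
      then have jr: "j = r" using j by simp
      have Ssc: "S *\<^sub>v s \<in> carrier_vec n" using S sc mult_mat_vec_carrier by metis
      have "gram S (ext_family n xs) $$ (i, j) = s \<bullet> (S *\<^sub>v s)" using g yi ir jr by simp
      also have "\<dots> = (\<Sum>k<length xs. 1 * (xs ! k \<bullet> (S *\<^sub>v s)))"
        unfolding s_def by (rule lcf_scalar_left[OF Ssc[unfolded s_def] xs])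
      also have "\<dots> = (\<Sum>k<r. \<Sum>l<r. Gm S xs k l)"
      proof (rule sum.cong)
        show "{..<length xs} = {..<r}" using r by simp
      next
        fix k assume k: "k \<in> {..<r}"
        have "xs ! k \<bullet> (S *\<^sub>v s) = (\<Sum>l<length xs. 1 * (xs ! k \<bullet> (S *\<^sub>v xs ! l)))"
          unfolding s_def by (rule bil_lcf_right[OF S xs nth_carrier[OF xs]]) (use k r in simp)
        then show "1 * (xs ! k \<bullet> (S *\<^sub>v s)) = (\<Sum>l<r. Gm S xs k l)"
          using r by (simp add: Gm_def)
      qed
      finally show ?thesis using iF False by (simp add: Gext_def)
    qed
  qed
qed

lemma B_mult:
  assumes xs: "set xs \<subseteq> carrier_vec n" and w: "w \<in> carrier_vec n"
  shows "sum_outer n (ext_family n xs) *\<^sub>v w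
       = lcf n xs (\<lambda>i. xs ! i \<bullet> w + (\<Sum>j<length xs. xs ! j \<bullet> w))"
proof -
  define s where "s = lcf n xs (\<lambda>_. 1)"
  have ys: "ext_family n xs = xs @ [s]" by (simp add: ext_family_eq s_def)
  have yc: "set (ext_family n xs) \<subseteq> carrier_vec n" using ys xs by (simp add: s_def)
  have "sum_outer n (ext_family n xs) *\<^sub>v w = lcf n (xs @ [s]) (\<lambda>i. (xs @ [s]) ! i \<bullet> w)"
    using sum_outer_mult[OF yc w] ys by simp
  also have "\<dots> = lcf n xs (\<lambda>i. (xs @ [s]) ! i \<bullet> w + (xs @ [s]) ! length xs \<bullet> w * 1)"
    unfolding s_def by (rule lcf_append_lcf)
  also have "\<dots> = lcf n xs (\<lambda>i. xs ! i \<bullet> w + (\<Sum>j<length xs. xs ! j \<bullet> w))"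
  proof (rule lcf_cong)
    fix i assume i: "i < length xs"
    have "s \<bullet> w = (\<Sum>j<length xs. 1 * (xs ! j \<bullet> w))"
      unfolding s_def by (rule lcf_scalar_left[OF w xs])
    then show "(xs @ [s]) ! i \<bullet> w + (xs @ [s]) ! length xs \<bullet> w * 1 = xs ! i \<bullet> w + (\<Sum>j<length xs. xs ! j \<bullet> w)"
      using i by (simp add: nth_append)
  qed
  finally show ?thesis .
qed

lemma invertible_inj:
  assumes B: "(B :: bit mat) \<in> carrier_mat n n" and inv: "invertible_mat B"
    and w: "w \<in> carrier_vec n" and Bw: "B *\<^sub>v w = 0\<^sub>v n"
  shows "w = 0\<^sub>v n"
proof -
  obtain B' where 1: "B * B' = 1\<^sub>m (dim_row B)" and 2: "B' * B = 1\<^sub>m (dim_row B')"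
    using inv unfolding invertible_mat_def inverts_mat_def by blast
  have "dim_col B' = n" using 1 B by (metis carrier_matD(1) index_mult_mat(3) index_one_mat(3))
  moreover have "dim_row B' = n" using 2 B by (metis carrier_matD(2) index_mult_mat(3) index_one_mat(3))
  ultimately have B'c: "B' \<in> carrier_mat n n" by auto
  have "w = (B' * B) *\<^sub>v w" using 2 B'c w by (simp add: carrier_matD)
  also have "\<dots> = B' *\<^sub>v (B *\<^sub>v w)" by (rule assoc_mult_mat_vec[OF B'c B w])
  also have "\<dots> = 0\<^sub>v n" using Bw B'c by (intro eq_vecI) (simp_all add: scalar_prod_def)
  finally show ?thesis .
qed

lemma inj_invertible:
  assumes B: "(B :: bit mat) \<in> carrier_mat n n"
    and inj: "\<And>w. w \<in> carrier_vec n \<Longrightarrow> B *\<^sub>v w = 0\<^sub>v n \<Longrightarrow> w = 0\<^sub>v n"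
  shows "\<exists>B'. B' \<in> carrier_mat n n \<and> B * B' = 1\<^sub>m n \<and> B' * B = 1\<^sub>m n"
proof -
  have "det B \<noteq> 0" using inj_det_nz[OF B] inj by blast
  then have "B \<in> Units (ring_mat TYPE(bit) n ())" by (rule det_non_zero_imp_unit[OF B])
  then show ?thesis unfolding Units_def by (auto simp: ring_mat_simps)
qed

(* ---- from L4.thy ---- *)

lemma bit_eq_add_iff: "(b::bit) = a + c \<longleftrightarrow> a = b + c"
  by (cases a; cases b; cases c) auto

lemma bit_add_move: "(x::bit) + y = z \<Longrightarrow> x = y + z"
  by (cases x; cases y; cases z) auto

lemma bit_neq_add: "(x::bit) \<noteq> y \<Longrightarrow> x + y = 1"
  by (cases x; cases y) auto

lemma config_unpack:
  assumes "config n r A B S xs"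
  shows "A \<in> carrier_mat n n" "B \<in> carrier_mat n n" "S \<in> carrier_mat n n"
    "transpose_mat A = A" "transpose_mat S = S" "S * A = 1\<^sub>m n" "A * S = 1\<^sub>m n"
    "set xs \<subseteq> carrier_vec n" "indep n xs" "length xs = r"
    "B = A + sum_outer n (ext_family n xs)" "invertible_mat B"
proof -
  note c = assms[unfolded config_def SGL_def lin_indep_list_def]
  show A: "A \<in> carrier_mat n n" and B: "B \<in> carrier_mat n n" and S: "S \<in> carrier_mat n n"
    and "transpose_mat A = A" "S * A = 1\<^sub>m n" "A * S = 1\<^sub>m n" "set xs \<subseteq> carrier_vec n"
    "length xs = r" "invertible_mat B" using c by auto
  show "transpose_mat S = S" using sym_inv[OF A S] c by auto
  show "indep n xs" using lin_indpt_imp_indep c by blast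
  have BA: "B - A = sum_outer n (ext_family n xs)" using c by blast
  show "B = A + sum_outer n (ext_family n xs)"
  proof (rule eq_matI)
    fix i j assume ij: "i < dim_row (A + sum_outer n (ext_family n xs))" "j < dim_col (A + sum_outer n (ext_family n xs))"
    then have i: "i < n" and j: "j < n" by (simp_all add: sum_outer_def)
    have "(B - A) $$ (i, j) = sum_outer n (ext_family n xs) $$ (i, j)" using BA by simp
    then have "B $$ (i,j) + A $$ (i,j) = sum_outer n (ext_family n xs) $$ (i, j)"
      using A B i j by simp
    then have "B $$ (i,j) = A $$ (i,j) + sum_outer n (ext_family n xs) $$ (i, j)"
      by (rule bit_add_move)
    then show "B $$ (i, j) = (A + sum_outer n (ext_family n xs)) $$ (i, j)"
      using i j by (simp add: sum_outer_def)
  qed (use A B in \<open>simp_all add: sum_outer_def\<close>)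
qed

lemma bil_sym:
  assumes S: "S \<in> carrier_mat n n" and St: "transpose_mat S = S"
    and x: "x \<in> carrier_vec n" and y: "y \<in> carrier_vec n"
  shows "x \<bullet> ((S :: bit mat) *\<^sub>v y) = y \<bullet> (S *\<^sub>v x)"
proof -
  have Sji: "S $$ (j, i) = S $$ (i, j)" if "i < n" "j < n" for i j
    using arg_cong[OF St, of "\<lambda>M. M $$ (i, j)"] that S by simp
  have "x \<bullet> (S *\<^sub>v y) = (\<Sum>a<n. x $ a * (\<Sum>b<n. S $$ (a, b) * y $ b))"
    using S x y by (simp add: scalar_prod_def mult_mat_vec_def row_def atLeast0LessThan)
  also have "\<dots> = (\<Sum>a<n. \<Sum>b<n. x $ a * S $$ (a, b) * y $ b)"
    by (simp add: sum_distrib_left mult.assoc)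
  also have "\<dots> = (\<Sum>b<n. \<Sum>a<n. x $ a * S $$ (a, b) * y $ b)" by (rule sum.swap)
  also have "\<dots> = (\<Sum>b<n. y $ b * (\<Sum>a<n. S $$ (b, a) * x $ a))"
    by (intro sum.cong refl) (simp add: sum_distrib_left Sji mult.commute mult.left_commute)
  also have "\<dots> = y \<bullet> (S *\<^sub>v x)"
    using S x y by (simp add: scalar_prod_def mult_mat_vec_def row_def atLeast0LessThan)
  finally show ?thesis .
qed

lemma sum_t_even:
  fixes r :: nat
  assumes "even r"
  shows "(\<Sum>j<r. t j + (\<Sum>k<r. t k)) = (\<Sum>k<r. (t k :: bit))"
proof -
  have "(\<Sum>j<r. t j + (\<Sum>k<r. t k)) = (\<Sum>j<r. t j) + of_nat r * (\<Sum>k<r. t k)"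
    by (simp add: sum.distrib)
  then show ?thesis using of_nat_even_bit[OF assms] by simp
qed

lemma kernel_crit:
  assumes A: "A \<in> carrier_mat n n" and S: "S \<in> carrier_mat n n" and SA: "S * A = 1\<^sub>m n"
    and xs: "set xs \<subseteq> carrier_vec n" and ix: "indep n xs" and r: "length xs = r" and ev: "even r"
    and Nk: "\<And>u. (\<And>i. i < r \<Longrightarrow> (\<Sum>j<r. Gm S xs i j * u j) = u i + (\<Sum>j<r. u j)) \<Longrightarrow> (\<And>i. i < r \<Longrightarrow> u i = 0)"
    and w: "w \<in> carrier_vec n" and Bw: "(A + sum_outer n (ext_family n xs)) *\<^sub>v w = 0\<^sub>v n"
  shows "w = 0\<^sub>v n"
proof -
  define t where "t i = xs ! i \<bullet> w" for i
  define T where "T = (\<Sum>j<r. t j)"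
  define u where "u i = t i + T" for i
  have C: "sum_outer n (ext_family n xs) \<in> carrier_mat n n" by (simp add: sum_outer_def)
  have Cw: "sum_outer n (ext_family n xs) *\<^sub>v w = lcf n xs u"
    unfolding B_mult[OF xs w] u_def t_def T_def r by simp
  have "A *\<^sub>v w + lcf n xs u = 0\<^sub>v n"
    using Bw add_mult_distrib_mat_vec[OF A C w] Cw by simp
  then have Aw: "A *\<^sub>v w = lcf n xs u"
  proof (intro eq_vecI)
    fix i assume h: "A *\<^sub>v w + lcf n xs u = 0\<^sub>v n" and "i < dim_vec (lcf n xs u)"
    then have i: "i < n" by simp
    have "(A *\<^sub>v w + lcf n xs u) $ i = 0" using h i by simp
    then show "(A *\<^sub>v w) $ i = lcf n xs u $ i" using i A by (simp add: bit_eq_iff_add)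
  qed (use A in simp)
  have "w = (S * A) *\<^sub>v w" using SA w by simp
  also have "\<dots> = S *\<^sub>v (A *\<^sub>v w)" by (rule assoc_mult_mat_vec[OF S A w])
  finally have wS: "w = S *\<^sub>v lcf n xs u" using Aw by simp
  have tk: "t k = (\<Sum>j<r. Gm S xs k j * u j)" if k: "k < r" for k
  proof -
    have "t k = xs ! k \<bullet> (S *\<^sub>v lcf n xs u)" unfolding t_def using wS by simp
    also have "\<dots> = (\<Sum>j<length xs. u j * (xs ! k \<bullet> (S *\<^sub>v xs ! j)))"
      by (rule bil_lcf_right[OF S xs nth_carrier[OF xs]]) (use k r in simp)
    finally show ?thesis using r by (simp add: Gm_def mult.commute)
  qed
  have su: "(\<Sum>j<r. u j) = T" unfolding u_def T_def using sum_t_even[OF ev] by simp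
  have "u i = 0" if i: "i < r" for i
  proof (rule Nk[OF _ i])
    fix k assume k: "k < r"
    have "u k + (\<Sum>j<r. u j) = t k" using su by (simp add: u_def add.assoc)
    then show "(\<Sum>j<r. Gm S xs k j * u j) = u k + (\<Sum>j<r. u j)" using tk[OF k] by simp
  qed
  then have "lcf n xs u = 0\<^sub>v n" unfolding lcf_def using r by (intro eq_vecI) auto
  then show ?thesis using wS S by (intro eq_vecI) (simp_all add: scalar_prod_def)
qed

lemma bit_solve:
  assumes "(a::bit) * c + b = 1"
  shows "\<exists>\<alpha> \<beta>. (\<alpha> = 1 \<or> \<beta> = 1) \<and> \<alpha> + \<alpha> * b + \<beta> * c = 0 \<and> \<alpha> * a + \<beta> + \<beta> * b = 0"
proof -
  consider "a = 0" "b = 1" | "a = 1" "b = 1" "c = 0" | "a = 1" "b = 0" "c = 1"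
    using assms by (cases a; cases b; cases c) auto
  then show ?thesis
  proof cases
    case 1 then show ?thesis by (intro exI[of _ 1] exI[of _ 0]) simp
  next
    case 2 then show ?thesis by (intro exI[of _ 0] exI[of _ 1]) simp
  next
    case 3 then show ?thesis by (intro exI[of _ 1] exI[of _ 1]) simp
  qed
qed

lemma r2_singular:
  assumes cf: "config n 2 A B S xs"
  shows "Gm S xs 0 0 * Gm S xs 1 1 = Gm S xs 0 1"
proof (rule ccontr)
  note c = config_unpack[OF cf]
  have A: "A \<in> carrier_mat n n" and B: "B \<in> carrier_mat n n" and S: "S \<in> carrier_mat n n"
    and xs: "set xs \<subseteq> carrier_vec n" and len: "length xs = 2" using c by auto
  define a where "a = Gm S xs 0 0"
  define b where "b = Gm S xs 0 1"
  define cc where "cc = Gm S xs 1 1"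
  have b10: "Gm S xs 1 0 = b" unfolding b_def Gm_def
    using bil_sym[OF S c(5) nth_carrier[OF xs] nth_carrier[OF xs]] len by simp
  assume "Gm S xs 0 0 * Gm S xs 1 1 \<noteq> Gm S xs 0 1"
  then have "a * cc + b = 1" unfolding a_def b_def cc_def by (rule bit_neq_add)
  then obtain \<alpha> \<beta> where ab: "\<alpha> = 1 \<or> \<beta> = 1" "\<alpha> + \<alpha> * b + \<beta> * cc = 0" "\<alpha> * a + \<beta> + \<beta> * b = 0"
    using bit_solve by blast
  define d where "d i = (if i = 0 then \<alpha> else \<beta>)" for i :: nat
  define w where "w = S *\<^sub>v lcf n xs d"
  have w_c: "w \<in> carrier_vec n" unfolding w_def using S mult_mat_vec_carrier lcf_carrier(1) by metis
  have Aw: "A *\<^sub>v w = lcf n xs d"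
  proof -
    have "A *\<^sub>v w = (A * S) *\<^sub>v lcf n xs d" unfolding w_def by (rule assoc_mult_mat_vec[symmetric, OF A S lcf_carrier(1)])
    then show ?thesis using c(7) by simp
  qed
  define t where "t i = xs ! i \<bullet> w" for i
  have tk: "t k = d 0 * Gm S xs k 0 + d 1 * Gm S xs k 1" if k: "k < 2" for k
  proof -
    have "t k = (\<Sum>j<length xs. d j * (xs ! k \<bullet> (S *\<^sub>v xs ! j)))"
      unfolding t_def w_def by (rule bil_lcf_right[OF S xs nth_carrier[OF xs]]) (use k len in simp)
    then show ?thesis using len by (simp add: Gm_def numeral_2_eq_2)
  qed
  have "sum_outer n (ext_family n xs) *\<^sub>v w = lcf n xs (\<lambda>i. t i + (\<Sum>j<2. t j))"
    unfolding B_mult[OF xs w_c] t_def len ..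
  then have "B *\<^sub>v w = lcf n xs d + lcf n xs (\<lambda>i. t i + (\<Sum>j<2. t j))"
    using c(11) add_mult_distrib_mat_vec[OF A _ w_c, of "sum_outer n (ext_family n xs)"] Aw
    by (simp add: sum_outer_def)
  also have "\<dots> = 0\<^sub>v n"
  proof (rule eq_vecI)
    fix i assume "i < dim_vec (0\<^sub>v n :: bit vec)"
    then have i: "i < n" by simp
    have e0: "d 0 + (t 0 + (t 0 + t 1)) = 0"
      using tk[of 0] tk[of 1] ab(2) b10 unfolding d_def a_def b_def cc_def
      by (simp add: algebra_simps)
    have e1: "d 1 + (t 1 + (t 0 + t 1)) = 0"
      using tk[of 0] tk[of 1] ab(3) b10 unfolding d_def a_def b_def cc_def
      by (simp add: algebra_simps)
    have "(lcf n xs d + lcf n xs (\<lambda>i. t i + (\<Sum>j<2. t j))) $ i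
        = (\<Sum>j<2. (d j + (t j + (t 0 + t 1))) * xs ! j $ i)"
      using i len by (simp add: lcf_def numeral_2_eq_2 algebra_simps)
    also have "\<dots> = 0" using e0 e1 by (simp add: numeral_2_eq_2)
    finally show "(lcf n xs d + lcf n xs (\<lambda>i. t i + (\<Sum>j<2. t j))) $ i = 0\<^sub>v n $ i" using i by simp
  qed simp
  finally have "w = 0\<^sub>v n" using invertible_inj[OF B c(12) w_c] by simp
  then have "lcf n xs d = A *\<^sub>v 0\<^sub>v n" using Aw by simp
  also have "\<dots> = 0\<^sub>v n" using A by (intro eq_vecI) (simp_all add: scalar_prod_def)
  finally have "\<forall>j<length xs. d j = 0" using c(9) unfolding indep_def by blast
  then have "d 0 = 0" "d 1 = 0" using len by auto
  then have "\<alpha> = 0" "\<beta> = 0" unfolding d_def by auto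
  then show False using ab(1) by simp
qed

(* ---- from L5.thy ---- *)

lemma rank_ge1:
  assumes M: "(M :: bit mat) \<in> carrier_mat d nc" and j: "j < nc" and nz: "col M j \<noteq> 0\<^sub>v d"
  shows "vec_space.rank d M \<ge> 1"
proof -
  interpret V: vec_space "TYPE(bit)" d .
  define v where "v = col M j"
  have vc: "v \<in> carrier_vec d" using M j by (simp add: v_def)
  have ind: "indep d [v]" unfolding indep_def
  proof (intro allI impI)
    fix c k assume h: "lcf d [v] c = 0\<^sub>v d" and k: "k < length [v]"
    show "c k = 0"
    proof (rule ccontr)
      assume "c k \<noteq> 0"
      then have c0: "c 0 = 1" using k by simp
      have "v = 0\<^sub>v d"
      proof (rule eq_vecI)
        fix a assume "a < dim_vec (0\<^sub>v d :: bit vec)"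
        then have a: "a < d" by simp
        have "lcf d [v] c $ a = 0" using h a by simp
        then show "v $ a = 0\<^sub>v d $ a" using a c0 by (simp add: lcf_def)
      qed (use vc in simp)
      then show False using nz by (simp add: v_def)
    qed
  qed
  have li: "V.lin_indpt {v}" using indep_imp_lin_indpt[OF _ _ ind] vc by simp
  have sub: "{v} \<subseteq> set (cols M)" using M j by (simp add: v_def cols_def)
  have "card {v} \<le> V.rank M" by (rule V.rank_ge_card_indpt[OF M sub li])
  then show ?thesis by simp
qed

lemma rank_ge2:
  assumes M: "(M :: bit mat) \<in> carrier_mat d nc" and i: "i < nc" and j: "j < nc"
    and nzi: "col M i \<noteq> 0\<^sub>v d" and nzj: "col M j \<noteq> 0\<^sub>v d" and ne: "col M i \<noteq> col M j"
  shows "vec_space.rank d M \<ge> 2"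
proof -
  interpret V: vec_space "TYPE(bit)" d .
  define u where "u = col M i"
  define v where "v = col M j"
  have uc: "u \<in> carrier_vec d" using M i by (simp add: u_def)
  have vc: "v \<in> carrier_vec d" using M j by (simp add: v_def)
  have ind: "indep d [u, v]" unfolding indep_def
  proof (intro allI impI)
    fix c k assume h: "lcf d [u, v] c = 0\<^sub>v d" and k: "k < length [u, v]"
    have ha: "c 0 * u $ a + c 1 * v $ a = 0" if a: "a < d" for a
    proof -
      have "lcf d [u, v] c $ a = 0" using h a by simp
      then show ?thesis using a by (simp add: lcf_def numeral_2_eq_2)
    qed
    have "c 0 = 0 \<and> c 1 = 0"
    proof (cases "c 0"; cases "c 1")
      assume "c 0 = 1" "c 1 = 0"
      then have "u = 0\<^sub>v d" using ha uc by (intro eq_vecI) auto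
      then show ?thesis using nzi by (simp add: u_def)
    next
      assume "c 0 = 0" "c 1 = 1"
      then have "v = 0\<^sub>v d" using ha vc by (intro eq_vecI) auto
      then show ?thesis using nzj by (simp add: v_def)
    next
      assume "c 0 = 1" "c 1 = 1"
      then have "u = v" using ha uc vc by (intro eq_vecI) (auto simp: bit_eq_iff_add)
      then show ?thesis using ne by (simp add: u_def v_def)
    qed simp
    then show "c k = 0" using k by (cases k) (auto simp: less_Suc_eq)
  qed
  have dist: "distinct [u, v]" using ne by (simp add: u_def v_def)
  have li: "V.lin_indpt {u, v}" using indep_imp_lin_indpt[OF _ dist ind] uc vc by simp
  have sub: "{u, v} \<subseteq> set (cols M)" using M i j by (simp add: u_def v_def cols_def)
  have "card {u, v} \<le> V.rank M" by (rule V.rank_ge_card_indpt[OF M sub li])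
  then show ?thesis using dist by simp
qed

lemma rank_zero_cols:
  assumes M: "(M :: bit mat) \<in> carrier_mat d nc" and r0: "vec_space.rank d M = 0" and j: "j < nc"
    and i: "i < d"
  shows "M $$ (i, j) = 0"
proof -
  have "col M j = 0\<^sub>v d" using rank_ge1[OF M j] r0 by linarith
  then have "col M j $ i = 0" using i by simp
  then show ?thesis using M i j by simp
qed

lemma rank1_structure:
  assumes M: "(M :: bit mat) \<in> carrier_mat d d"
    and sym: "\<And>i j. i < d \<Longrightarrow> j < d \<Longrightarrow> M $$ (i, j) = M $$ (j, i)"
    and r1: "vec_space.rank d M = 1"
  shows "\<exists>v q. q < d \<and> v q = 1 \<and> (\<forall>i<d. \<forall>j<d. M $$ (i, j) = v i * v j)"
proof -
  interpret V: vec_space "TYPE(bit)" d .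
  obtain q where q: "q < d" "col M q \<noteq> 0\<^sub>v d"
  proof (rule ccontr)
    assume "\<not> thesis"
    with that have all0: "\<forall>q<d. col M q = 0\<^sub>v d" by blast
    have "M = 0\<^sub>m d d"
    proof (rule eq_matI)
      fix i j assume "i < dim_row (0\<^sub>m d d :: bit mat)" "j < dim_col (0\<^sub>m d d :: bit mat)"
      then have ij: "i < d" "j < d" by auto
      have "col M j $ i = 0" using all0 ij by simp
      then show "M $$ (i, j) = 0\<^sub>m d d $$ (i, j)" using M ij by simp
    qed (use M in auto)
    then have "V.rank M = 0" using V.rank_0I by simp
    then show False using r1 by simp
  qed
  define v where "v i = M $$ (i, q)" for i
  have colj: "col M j = 0\<^sub>v d \<or> col M j = col M q" if j: "j < d" for j
  proof (rule ccontr)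
    assume "\<not> ?thesis"
    then have "V.rank M \<ge> 2" using rank_ge2[OF M j q(1) _ q(2)] by auto
    then show False using r1 by simp
  qed
  have Mij: "M $$ (i, j) = (if col M j = 0\<^sub>v d then 0 else v i)" if "i < d" "j < d" for i j
  proof (cases "col M j = 0\<^sub>v d")
    case True
    have "M $$ (i, j) = col M j $ i" using M that by simp
    also have "\<dots> = 0" using True that by simp
    finally show ?thesis using True by simp
  next
    case False
    then have "col M j = col M q" using colj that by blast
    then have "col M j $ i = col M q $ i" by simp
    then show ?thesis using False M that q by (simp add: v_def)
  qed
  have vq: "v q = 1"
  proof (rule ccontr)
    assume "v q \<noteq> 1"
    then have vq0: "v q = 0" by simp
    have "v j = 0" if j: "j < d" for j
    proof -
      have "v j = M $$ (q, j)" unfolding v_def using sym j q by simp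
      also have "\<dots> = 0" using Mij[OF q(1) j] vq0 by simp
      finally show ?thesis .
    qed
    then have "col M q = 0\<^sub>v d" using M q by (intro eq_vecI) (auto simp: v_def)
    then show False using q by simp
  qed
  have "M $$ (i, j) = v i * v j" if ij: "i < d" "j < d" for i j
  proof -
    have "v j = M $$ (q, j)" unfolding v_def using sym ij q by simp
    then have "v j = (if col M j = 0\<^sub>v d then 0 else 1)" using Mij[OF q(1) ij(2)] vq by simp
    then show ?thesis using Mij[OF ij] by simp
  qed
  then show ?thesis using q(1) vq by blast
qed

(* ---- from L6.thy ---- *)

lemma S_inj:
  assumes A: "A \<in> carrier_mat n n" and S: "S \<in> carrier_mat n n" and AS: "A * S = 1\<^sub>m n"
    and y: "y \<in> carrier_vec n" and Sy: "(S :: bit mat) *\<^sub>v y = 0\<^sub>v n"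
  shows "y = 0\<^sub>v n"
proof -
  have "y = (A * S) *\<^sub>v y" using AS y by simp
  also have "\<dots> = A *\<^sub>v (S *\<^sub>v y)" by (rule assoc_mult_mat_vec[OF A S y])
  also have "\<dots> = 0\<^sub>v n" using Sy A by (intro eq_vecI) (simp_all add: scalar_prod_def)
  finally show ?thesis .
qed

lemma indep_map_S:
  assumes A: "A \<in> carrier_mat n n" and S: "S \<in> carrier_mat n n" and AS: "A * S = 1\<^sub>m n"
    and Ls: "set Ls \<subseteq> carrier_vec n" and iL: "indep n Ls"
  shows "indep n (map (\<lambda>x. S *\<^sub>v x) Ls)"
  unfolding indep_def
proof (intro allI impI)
  fix d k assume h: "lcf n (map (\<lambda>x. S *\<^sub>v x) Ls) d = 0\<^sub>v n" and k: "k < length (map (\<lambda>x. S *\<^sub>v x) Ls)"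
  have "S *\<^sub>v lcf n Ls d = 0\<^sub>v n" using h mat_lcf[OF S Ls] by simp
  then have "lcf n Ls d = 0\<^sub>v n" using S_inj[OF A S AS] by simp
  then show "d k = 0" using iL k unfolding indep_def by simp
qed

lemma map_S_carrier:
  assumes S: "S \<in> carrier_mat n n"
  shows "set (map (\<lambda>x. S *\<^sub>v x) Ls) \<subseteq> carrier_vec n"
proof
  fix y assume "y \<in> set (map (\<lambda>x. S *\<^sub>v x) Ls)"
  then obtain x where "y = S *\<^sub>v x" by auto
  then show "y \<in> carrier_vec n" using S by (metis carrier_matD(1) carrier_vecI dim_mult_mat_vec)
qed

lemma gram_carrier: "gram S ys \<in> carrier_mat (length ys) (length ys)"
  by (simp add: gram_def)

lemma gram_sym:
  assumes S: "S \<in> carrier_mat n n" and St: "transpose_mat S = S" and ys: "set ys \<subseteq> carrier_vec n"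
    and i: "i < length ys" and j: "j < length ys"
  shows "gram S ys $$ (i, j) = gram S ys $$ (j, i)"
  using i j bil_sym[OF S St nth_carrier[OF ys i] nth_carrier[OF ys j]] by (simp add: gram_def)

lemma ext_carrier: "set xs \<subseteq> carrier_vec n \<Longrightarrow> set (ext_family n xs) \<subseteq> carrier_vec n"
  by (simp add: ext_family_eq)

lemma ext_length: "length (ext_family n xs) = Suc (length xs)"
  by (simp add: ext_family_eq)

lemma sum_two_delta:
  fixes r :: nat
  assumes "a < r" "p < r"
  shows "(\<Sum>j<r. ((if j = a then 1 else 0) + (if j = p then c else 0)) * G j) = G a + c * (G p :: bit)"
proof -
  have "(\<Sum>j<r. ((if j = a then 1 else 0) + (if j = p then c else 0)) * G j)
      = (\<Sum>j<r. (if j = a then G j else 0) + (if j = p then c * G j else 0))"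
    by (intro sum.cong refl) (simp add: distrib_right)
  also have "\<dots> = (\<Sum>j<r. (if j = a then G j else 0)) + (\<Sum>j<r. (if j = p then c * G j else 0))"
    by (rule sum.distrib)
  also have "(\<Sum>j<r. (if j = a then G j else 0)) = G a" using assms(1) by (subst sum.delta) auto
  also have "(\<Sum>j<r. (if j = p then c * G j else 0)) = c * G p" using assms(2) by (subst sum.delta) auto
  finally show ?thesis .
qed

lemma nec_rank1:
  assumes cf: "config n r A B S xs" and r0: "0 < r"
    and rk: "vec_space.rank (r + 1) (gram S (ext_family n xs)) = 1"
  shows "2 * r \<le> n + 1"
proof -
  note c = config_unpack[OF cf]
  have A: "A \<in> carrier_mat n n" and S: "S \<in> carrier_mat n n" and xs: "set xs \<subseteq> carrier_vec n"
    and len: "length xs = r" and AS: "A * S = 1\<^sub>m n" and ix: "indep n xs" using c by auto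
  define M where "M = gram S (ext_family n xs)"
  have Mc: "M \<in> carrier_mat (r + 1) (r + 1)" using gram_carrier[of S "ext_family n xs"]
    by (simp add: M_def ext_length len)
  have Msym: "M $$ (i, j) = M $$ (j, i)" if "i < r + 1" "j < r + 1" for i j
    unfolding M_def by (rule gram_sym[OF S c(5) ext_carrier[OF xs]]) (use that len in \<open>simp_all add: ext_length\<close>)
  obtain v q where vq: "q < r + 1" "v q = 1" "\<forall>i<r + 1. \<forall>j<r + 1. M $$ (i, j) = v i * v j"
    using rank1_structure[OF Mc Msym] rk by (auto simp: M_def)
  have ME: "M $$ (i, j) = Gext (Gm S xs) r i j" if "i \<le> r" "j \<le> r" for i j
    unfolding M_def by (rule gram_entry[OF S xs len that])
  have hG: "Gm S xs i j = v i * v j" if "i < r" "j < r" for i j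
    using ME[of i j] vq(3) that by (simp add: Gext_def)
  obtain p where p: "p < r" "v p = 1"
  proof (rule ccontr)
    assume "\<not> thesis"
    have "\<forall>p<r. v p = 0"
    proof (intro allI impI)
      fix p assume p: "p < r"
      show "v p = 0"
      proof (rule ccontr)
        assume "v p \<noteq> 0"
        then have "v p = 1" by simp
        then show False using that p \<open>\<not> thesis\<close> by blast
      qed
    qed
    then have G0: "Gm S xs i j = 0" if "i < r" "j < r" for i j using hG that by simp
    have "Gext (Gm S xs) r q q = 0" using G0 by (simp add: Gext_def)
    moreover have "M $$ (q, q) = 1" using vq by simp
    ultimately show False using ME[of q q] vq(1) by simp
  qed
  define idx where "idx k = (if k < p then k else Suc k)" for k
  define coef where "coef k j = (if j = idx k then 1 else 0) + (if j = p then v (idx k) else 0)" for k j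
  define Ls where "Ls = map (\<lambda>k. lcf n xs (coef k)) [0..<r - 1]"
  define zs where "zs = map (\<lambda>x. S *\<^sub>v x) Ls"
  have Lc: "set Ls \<subseteq> carrier_vec n" unfolding Ls_def by auto
  have idx_lt: "idx k < r" if "k < r - 1" for k
  proof (cases "k < p")
    case True then show ?thesis using p by (simp add: idx_def)
  next
    case False then show ?thesis using that by (simp add: idx_def)
  qed
  have idx_ne: "idx k \<noteq> p" for k by (simp add: idx_def)
  have idx_inj: "idx k = idx k' \<longleftrightarrow> k = k'" for k k' by (auto simp: idx_def split: if_splits)
  have iL: "indep n Ls" unfolding indep_def
  proof (intro allI impI)
    fix d k0 assume h: "lcf n Ls d = 0\<^sub>v n" and k0: "k0 < length Ls"
    have k0r: "k0 < r - 1" using k0 by (simp add: Ls_def)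
    have "lcf n Ls d = lcf n xs (\<lambda>j. \<Sum>k<r - 1. d k * coef k j)"
    proof -
      have "lcf n xs (\<lambda>j. \<Sum>k<r - 1. d k * coef k j) = vec n (\<lambda>a. \<Sum>k<r - 1. d k * lcf n xs (coef k) $ a)"
        by (rule lcf_lin)
      also have "\<dots> = lcf n Ls d" unfolding Ls_def lcf_def by (intro eq_vecI) auto
      finally show ?thesis by simp
    qed
    then have "\<forall>j<length xs. (\<Sum>k<r - 1. d k * coef k j) = 0" using h ix unfolding indep_def by metis
    then have "(\<Sum>k<r - 1. d k * coef k (idx k0)) = 0" using idx_lt[OF k0r] len by simp
    moreover have "(\<Sum>k<r - 1. d k * coef k (idx k0)) = (\<Sum>k<r - 1. if k = k0 then d k else 0)"
      by (intro sum.cong refl) (auto simp: coef_def idx_inj idx_ne)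
    moreover have "\<dots> = d k0" using k0r by (subst sum.delta) auto
    ultimately show "d k0 = 0" by simp
  qed
  have zc: "set zs \<subseteq> carrier_vec n" unfolding zs_def by (rule map_S_carrier[OF S])
  have iz: "indep n zs" unfolding zs_def by (rule indep_map_S[OF A S AS Lc iL])
  have orth: "xs ! i \<bullet> zs ! k = 0" if i: "i < length xs" and k: "k < length zs" for i k
  proof -
    have kr: "k < r - 1" using k by (simp add: zs_def Ls_def)
    have "xs ! i \<bullet> zs ! k = xs ! i \<bullet> (S *\<^sub>v lcf n xs (coef k))" using kr by (simp add: zs_def Ls_def)
    also have "\<dots> = (\<Sum>j<length xs. coef k j * (xs ! i \<bullet> (S *\<^sub>v xs ! j)))"
      by (rule bil_lcf_right[OF S xs nth_carrier[OF xs i]])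
    also have "\<dots> = (\<Sum>j<r. ((if j = idx k then 1 else 0) + (if j = p then v (idx k) else 0)) * Gm S xs i j)"
      using len by (simp add: coef_def Gm_def)
    also have "\<dots> = Gm S xs i (idx k) + v (idx k) * Gm S xs i p"
      by (rule sum_two_delta[OF idx_lt[OF kr] p(1)])
    also have "\<dots> = 0" using hG[of i "idx k"] hG[of i p] i len idx_lt[OF kr] p by (simp add: algebra_simps)
    finally show ?thesis .
  qed
  have "length xs + length zs \<le> n" by (rule iso[OF xs zc ix iz orth])
  then show ?thesis using len r0 by (simp add: zs_def Ls_def)
qed

(* ---- from C10.thy ---- *)

lemma less3_cases: "(i::nat) < 3 \<Longrightarrow> i = 0 \<or> i = 1 \<or> i = 2" by auto

lemma nec_r2:
  assumes cf: "config n 2 A B S xs" and n3: "n \<le> 3"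
    and rk: "vec_space.rank (2 + 1) (gram S (ext_family n xs)) \<noteq> 1"
  shows False
proof -
  note c = config_unpack[OF cf]
  have A: "A \<in> carrier_mat n n" and S: "S \<in> carrier_mat n n" and xs: "set xs \<subseteq> carrier_vec n"
    and len: "length xs = 2" and AS: "A * S = 1\<^sub>m n" and ix: "indep n xs" using c by auto
  define a where "a = Gm S xs 0 0"
  define b where "b = Gm S xs 0 1"
  define cc where "cc = Gm S xs 1 1"
  have b10: "Gm S xs 1 0 = b" unfolding b_def Gm_def
    using bil_sym[OF S c(5) nth_carrier[OF xs] nth_carrier[OF xs]] len by simp
  have hb: "b = a * cc" using r2_singular[OF cf] unfolding a_def b_def cc_def by simp
  define M where "M = gram S (ext_family n xs)"
  have Mc: "M \<in> carrier_mat 3 3" using gram_carrier[of S "ext_family n xs"]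
    by (simp add: M_def ext_length len)
  have ME: "M $$ (i, j) = Gext (Gm S xs) 2 i j" if "i \<le> 2" "j \<le> 2" for i j
    unfolding M_def by (rule gram_entry[OF S xs len that])
  define f where "f i = (if i = (0::nat) then a else if i = 1 then cc else a + cc)" for i
  have prod: "M $$ (i, j) = f i * f j" if "i < 3" "j < 3" for i j
  proof -
    have G: "Gm S xs 0 0 = a" "Gm S xs 0 1 = a * cc" "Gm S xs 1 0 = a * cc" "Gm S xs 1 1 = cc"
      using b10 hb by (simp_all add: a_def cc_def b_def)
    then have G': "Gm S xs 0 (Suc 0) = a * cc" "Gm S xs (Suc 0) 0 = a * cc" "Gm S xs (Suc 0) (Suc 0) = cc"
      by simp_all
    have "Gext (Gm S xs) 2 i j = f i * f j"
      using less3_cases[OF that(1)] less3_cases[OF that(2)]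
      by (cases a; cases cc) (auto simp: Gext_def f_def G G' numeral_2_eq_2)
    then show ?thesis using ME that by simp
  qed
  interpret V: vec_space "TYPE(bit)" 3 .
  have "V.rank M \<le> 1" by (rule V.rank_le_1_product_entries[OF Mc, of f f]) (use prod Mc in auto)
  then have r0: "V.rank M = 0" using rk by (simp add: M_def)
  have "M $$ (0, 0) = 0" "M $$ (1, 1) = 0" using rank_zero_cols[OF Mc r0] by auto
  then have a0: "a = 0" and c0: "cc = 0" using prod[of 0 0] prod[of 1 1] by (simp_all add: f_def)
  have G0: "Gm S xs i k = 0" if "i < 2" "k < 2" for i k
    using that a0 c0 hb b10 unfolding a_def b_def cc_def by (auto simp: less_2_cases_iff)
  define zs where "zs = map (\<lambda>x. S *\<^sub>v x) xs"
  have zc: "set zs \<subseteq> carrier_vec n" unfolding zs_def by (rule map_S_carrier[OF S])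
  have iz: "indep n zs" unfolding zs_def by (rule indep_map_S[OF A S AS xs ix])
  have orth: "xs ! i \<bullet> zs ! k = 0" if "i < length xs" "k < length zs" for i k
    using G0[of i k] that len by (simp add: zs_def Gm_def)
  have "length xs + length zs \<le> n" by (rule iso[OF xs zc ix iz orth])
  then show False using len n3 by (simp add: zs_def)
qed

(* ---- from L7.thy ---- *)

lemma sum_delta_mult: fixes j n :: nat shows "j < n \<Longrightarrow> (\<Sum>b\<in>{0..<n}. f b * (if b = j then 1 else 0)) = (f j :: bit)"
proof -
  assume j: "j < n"
  have "(\<Sum>b\<in>{0..<n}. f b * (if b = j then 1 else 0)) = (\<Sum>b\<in>{0..<n}. if b = j then f b else 0)"
    by (intro sum.cong refl) simp
  also have "\<dots> = f j" using j by (subst sum.delta) auto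
  finally show ?thesis .
qed

lemma sum_delta_mult': fixes j n :: nat shows "j < n \<Longrightarrow> (\<Sum>b\<in>{0..<n}. (if b = j then 1 else 0) * f b) = (f j :: bit)"
  using sum_delta_mult[of j n f] by (simp add: mult.commute)

lemma unit_bil:
  assumes S: "(S :: bit mat) \<in> carrier_mat n n" and i: "i < n" and j: "j < n"
  shows "unit_vec n i \<bullet> (S *\<^sub>v unit_vec n j) = S $$ (i, j)"
proof -
  have Sj: "S *\<^sub>v unit_vec n j = col S j"
  proof (rule eq_vecI)
    fix a assume "a < dim_vec (col S j)"
    then have a: "a < n" using S by simp
    have "(S *\<^sub>v unit_vec n j) $ a = (\<Sum>b\<in>{0..<n}. S $$ (a, b) * (if b = j then 1 else 0))"
      using S a j by (simp add: mult_mat_vec_def scalar_prod_def row_def)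
    also have "\<dots> = S $$ (a, j)" by (rule sum_delta_mult[OF j])
    finally show "(S *\<^sub>v unit_vec n j) $ a = col S j $ a" using S a j by simp
  qed (use S in simp)
  have "unit_vec n i \<bullet> col S j = (\<Sum>a\<in>{0..<n}. (if a = i then 1 else 0) * col S j $ a)"
    using S i j by (simp add: scalar_prod_def)
  also have "\<dots> = col S j $ i" by (rule sum_delta_mult'[OF i])
  also have "\<dots> = S $$ (i, j)" using S i j by simp
  finally show ?thesis using Sj by simp
qed

lemma units_indep:
  assumes "r \<le> n"
  shows "indep n (map (unit_vec n) [0..<r])"
  unfolding indep_def
proof (intro allI impI)
  fix c j assume h: "lcf n (map (unit_vec n) [0..<r]) c = 0\<^sub>v n" and j: "j < length (map (unit_vec n) [0..<r])"
  then have jr: "j < r" by simp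
  then have jn: "j < n" using assms by simp
  have "lcf n (map (unit_vec n) [0..<r]) c $ j = (\<Sum>k\<in>{0..<r}. c k * (if j = k then 1 else 0))"
    using jn assms by (simp add: lcf_def atLeast0LessThan[symmetric] cong: if_cong)
  also have "\<dots> = (\<Sum>k\<in>{0..<r}. c k * (if k = j then 1 else 0))"
    by (intro sum.cong) auto
  also have "\<dots> = c j" by (rule sum_delta_mult[OF jr])
  finally show "c j = 0" using h jn by simp
qed

lemma Gm_units:
  assumes S: "S \<in> carrier_mat n n" and r: "r \<le> n" and i: "i < r" and j: "j < r"
  shows "Gm S (map (unit_vec n) [0..<r]) i j = S $$ (i, j)"
  using unit_bil[OF S, of i j] i j r by (simp add: Gm_def)

lemma inj_invertible_mat:
  assumes B: "(B :: bit mat) \<in> carrier_mat n n"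
    and inj: "\<And>w. w \<in> carrier_vec n \<Longrightarrow> B *\<^sub>v w = 0\<^sub>v n \<Longrightarrow> w = 0\<^sub>v n"
  shows "invertible_mat B"
proof -
  obtain B' where "B' \<in> carrier_mat n n" "B * B' = 1\<^sub>m n" "B' * B = 1\<^sub>m n"
    using inj_invertible[OF B inj] by blast
  then show ?thesis using B unfolding invertible_mat_def inverts_mat_def square_mat.simps
    by (metis carrier_matD(1) carrier_matD(2))
qed

lemma cons:
  fixes S :: "bit mat"
  assumes S: "S \<in> carrier_mat n n" and St: "transpose_mat S = S"
    and Sinj: "\<And>y. y \<in> carrier_vec n \<Longrightarrow> S *\<^sub>v y = 0\<^sub>v n \<Longrightarrow> y = 0\<^sub>v n"
    and rn: "r \<le> n" and ev: "even r"
    and Nk: "\<And>u. (\<And>i. i < r \<Longrightarrow> (\<Sum>j<r. S $$ (i, j) * u j) = u i + (\<Sum>j<r. u j)) \<Longrightarrow> (\<And>i. i < r \<Longrightarrow> u i = 0)"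
  shows "\<exists>A B. config n r A B S (map (unit_vec n) [0..<r])"
proof -
  define xs :: "bit vec list" where "xs = map (unit_vec n) [0..<r]"
  obtain A where A: "A \<in> carrier_mat n n" "S * A = 1\<^sub>m n" "A * S = 1\<^sub>m n"
    using inj_invertible[OF S Sinj] by blast
  have At: "transpose_mat A = A" by (rule sym_inv[OF S A(1) St A(2)])
  have xc: "set xs \<subseteq> carrier_vec n" unfolding xs_def by auto
  have len: "length xs = r" unfolding xs_def by simp
  have ix: "indep n xs" unfolding xs_def by (rule units_indep[OF rn])
  have dx: "distinct xs" using indep_distinct[OF ix] .
  define C where "C = sum_outer n (ext_family n xs)"
  have Cc: "C \<in> carrier_mat n n" by (simp add: C_def sum_outer_def)
  define B where "B = A + C"
  have Bc: "B \<in> carrier_mat n n" using A Cc by (simp add: B_def)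
  have Bt: "transpose_mat B = B"
  proof (rule eq_matI)
    fix i j assume "i < dim_row B" "j < dim_col B"
    then have ij: "i < n" "j < n" using Bc by auto
    have "A $$ (j, i) = A $$ (i, j)" using arg_cong[OF At, of "\<lambda>M. M $$ (i, j)"] ij A by simp
    then show "transpose_mat B $$ (i, j) = B $$ (i, j)"
      using ij A Cc by (simp add: B_def C_def sum_outer_def mult.commute)
  qed (use Bc in auto)
  have Ainv: "invertible_mat A"
    using A unfolding invertible_mat_def inverts_mat_def square_mat.simps
    by (metis carrier_matD(1) carrier_matD(2) S)
  have Binj: "w = 0\<^sub>v n" if "w \<in> carrier_vec n" "B *\<^sub>v w = 0\<^sub>v n" for w
  proof (rule kernel_crit[OF A(1) S A(2) xc ix len ev _ that[unfolded B_def C_def]])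
    fix u i assume h: "\<And>i. i < r \<Longrightarrow> (\<Sum>j<r. Gm S xs i j * u j) = u i + (\<Sum>j<r. u j)" and i: "i < r"
    show "u i = 0"
    proof (rule Nk[OF _ i])
      fix k assume k: "k < r"
      have "(\<Sum>j<r. S $$ (k, j) * u j) = (\<Sum>j<r. Gm S xs k j * u j)"
        using Gm_units[OF S rn k] unfolding xs_def by simp
      then show "(\<Sum>j<r. S $$ (k, j) * u j) = u k + (\<Sum>j<r. u j)" using h[OF k] by simp
    qed
  qed
  have Binv: "invertible_mat B" by (rule inj_invertible_mat[OF Bc Binj])
  have BA: "B - A = C"
  proof (rule eq_matI)
    fix i j assume "i < dim_row C" "j < dim_col C"
    then have ij: "i < n" "j < n" using Cc by auto
    show "(B - A) $$ (i, j) = C $$ (i, j)" using ij A Cc by (simp add: B_def)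
  qed (use A Cc in \<open>auto simp: B_def\<close>)
  have li: "lin_indep_list n xs"
    unfolding lin_indep_list_def using xc dx indep_imp_lin_indpt[OF xc dx ix] by blast
  have "config n r A B S xs"
    unfolding config_def SGL_def using A At Ainv Bc Bt Binv len li BA S by (simp add: C_def)
  then show ?thesis unfolding xs_def by blast
qed

definition perm_mat :: "nat \<Rightarrow> (nat \<Rightarrow> nat) \<Rightarrow> bit mat" where
  "perm_mat n \<sigma> = mat n n (\<lambda>(i, j). if \<sigma> i = j then 1 else 0)"

lemma perm_mat_props:
  assumes inv: "\<And>i. i < n \<Longrightarrow> \<sigma> i < n \<and> \<sigma> (\<sigma> i) = i"
  shows "perm_mat n \<sigma> \<in> carrier_mat n n" "transpose_mat (perm_mat n \<sigma>) = perm_mat n \<sigma>"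
    "\<And>y. y \<in> carrier_vec n \<Longrightarrow> perm_mat n \<sigma> *\<^sub>v y = 0\<^sub>v n \<Longrightarrow> y = 0\<^sub>v n"
proof -
  show P: "perm_mat n \<sigma> \<in> carrier_mat n n" by (simp add: perm_mat_def)
  show "transpose_mat (perm_mat n \<sigma>) = perm_mat n \<sigma>"
  proof (rule eq_matI)
    fix i j assume "i < dim_row (perm_mat n \<sigma>)" "j < dim_col (perm_mat n \<sigma>)"
    then have ij: "i < n" "j < n" by (auto simp: perm_mat_def)
    have "(\<sigma> j = i) = (\<sigma> i = j)" using inv ij by metis
    then show "transpose_mat (perm_mat n \<sigma>) $$ (i, j) = perm_mat n \<sigma> $$ (i, j)"
      using ij by (simp add: perm_mat_def)
  qed (auto simp: perm_mat_def)
  fix y assume y: "y \<in> carrier_vec n" and h: "perm_mat n \<sigma> *\<^sub>v y = 0\<^sub>v n"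
  have yi: "y $ (\<sigma> i) = 0" if i: "i < n" for i
  proof -
    have "(perm_mat n \<sigma> *\<^sub>v y) $ i = (\<Sum>b\<in>{0..<n}. (if \<sigma> i = b then 1 else 0) * y $ b)"
      using i y by (simp add: perm_mat_def mult_mat_vec_def scalar_prod_def row_def)
    also have "\<dots> = (\<Sum>b\<in>{0..<n}. (if b = \<sigma> i then 1 else 0) * y $ b)"
      by (intro sum.cong) auto
    also have "\<dots> = y $ (\<sigma> i)" by (rule sum_delta_mult') (use inv i in blast)
    finally show ?thesis using h i by simp
  qed
  show "y = 0\<^sub>v n"
  proof (rule eq_vecI)
    fix k assume "k < dim_vec (0\<^sub>v n :: bit vec)"
    then have k: "k < n" by simp
    have "y $ k = y $ (\<sigma> (\<sigma> k))" using inv k by simp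
    also have "\<dots> = 0" using yi inv k by blast
    finally show "y $ k = 0\<^sub>v n $ k" using k by simp
  qed (use y in simp)
qed

(* ---- from L8.thy ---- *)

definition sig1 :: "nat \<Rightarrow> nat \<Rightarrow> nat" where
  "sig1 r i = (if i = 0 then 0 else if i < r then i + r - 1 else if i < 2 * r - 1 then i + 1 - r else i)"

lemma sig1_inv: "2 * r - 1 \<le> n \<Longrightarrow> i < n \<Longrightarrow> sig1 r i < n \<and> sig1 r (sig1 r i) = i"
proof -
  assume rn: "2 * r - 1 \<le> n" and i: "i < n"
  consider "i = 0" | "0 < i" "i < r" | "r \<le> i" "i < 2 * r - 1" "0 < i" | "2 * r - 1 \<le> i" "r \<le> i" "0 < i" by linarith
  then show ?thesis
  proof cases
    case 1 then show ?thesis using i by (simp add: sig1_def)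
  next
    case 2
    then have "sig1 r i = i + r - 1" by (simp add: sig1_def)
    moreover have "i + r - 1 \<noteq> 0" "\<not> i + r - 1 < r" "i + r - 1 < 2 * r - 1" using 2 by linarith+
    ultimately show ?thesis using 2 rn by (simp add: sig1_def)
  next
    case 3
    then have "sig1 r i = i + 1 - r" by (simp add: sig1_def)
    moreover have "i + 1 - r \<noteq> 0" "i + 1 - r < r" using 3 by linarith+
    ultimately show ?thesis using 3 i by (simp add: sig1_def)
  next
    case 4 then show ?thesis using i by (simp add: sig1_def)
  qed
qed

lemma bit_self_add: "(x::bit) = x + y \<Longrightarrow> y = 0" by (cases x; cases y) auto

lemma sum_delta_lt: fixes r :: nat shows "k < r \<Longrightarrow> (\<Sum>j<r. if j = k then (f j :: bit) else 0) = f k"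
  by (subst sum.delta) auto

lemma cons_rank1:
  assumes r2: "2 \<le> r" and ev: "even r" and rn: "2 * r - 1 \<le> n"
  shows "\<exists>A B Ainv xs. config n r A B Ainv xs \<and> vec_space.rank (r + 1) (gram Ainv (ext_family n xs)) = 1"
proof -
  define S where "S = perm_mat n (sig1 r)"
  have inv: "\<And>i. i < n \<Longrightarrow> sig1 r i < n \<and> sig1 r (sig1 r i) = i" using sig1_inv[OF rn] by blast
  have P2: "transpose_mat S = S" unfolding S_def using perm_mat_props(2)[of n "sig1 r"] inv by blast
  have P3: "y = 0\<^sub>v n" if "y \<in> carrier_vec n" "S *\<^sub>v y = 0\<^sub>v n" for y
    using perm_mat_props(3)[of n "sig1 r" y] inv that unfolding S_def by blast
  have Sc: "S \<in> carrier_mat n n" by (simp add: S_def perm_mat_def)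
  have rn': "r \<le> n" using rn r2 by linarith
  have Sij: "S $$ (i, j) = (if i = 0 \<and> j = 0 then 1 else 0)" if "i < r" "j < r" for i j
    using that rn' by (auto simp: S_def perm_mat_def sig1_def)
  have Nk: "u i = 0" if h: "\<And>i. i < r \<Longrightarrow> (\<Sum>j<r. S $$ (i, j) * u j) = u i + (\<Sum>j<r. u j)" and i: "i < r" for u :: "nat \<Rightarrow> bit" and i :: nat
  proof -
    have row: "(\<Sum>j<r. S $$ (k, j) * u j) = (if k = 0 then u 0 else 0)" if k: "k < r" for k
    proof -
      have "(\<Sum>j<r. S $$ (k, j) * u j) = (\<Sum>j<r. if j = 0 then (if k = 0 then u j else 0) else 0)"
        using k by (intro sum.cong refl) (simp add: Sij)
      also have "\<dots> = (if k = 0 then u 0 else 0)" using r2 by (subst sum.delta) auto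
      finally show ?thesis .
    qed
    have "u 0 = u 0 + (\<Sum>j<r. u j)" using h[of 0] row[of 0] r2 by simp
    then have s0: "(\<Sum>j<r. u j) = 0" by (rule bit_self_add)
    have ui: "u k = 0" if "0 < k" "k < r" for k using h[of k] row[of k] s0 that by simp
    have "(\<Sum>j<r. u j) = (\<Sum>j<r. if j = 0 then u j else 0)" using ui by (intro sum.cong refl) auto
    also have "\<dots> = u 0" using r2 by (subst sum.delta) auto
    finally have "u 0 = 0" using s0 by simp
    then show ?thesis using ui i by (cases "i = 0") auto
  qed
  have "\<exists>A B. config n r A B S (map (unit_vec n) [0..<r])"
  proof (rule cons[OF Sc P2 P3 rn' ev])
    fix u :: "nat \<Rightarrow> bit" and i :: nat
    assume "\<And>i. i < r \<Longrightarrow> (\<Sum>j<r. S $$ (i, j) * u j) = u i + (\<Sum>j<r. u j)" "i < r"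
    then show "u i = 0" by (rule Nk)
  qed
  then obtain A B where cf: "config n r A B S (map (unit_vec n) [0..<r])" by blast
  define xs :: "bit vec list" where "xs = map (unit_vec n) [0..<r]"
  have xc: "set xs \<subseteq> carrier_vec n" and len: "length xs = r" unfolding xs_def by auto
  define M where "M = gram S (ext_family n xs)"
  have Mc: "M \<in> carrier_mat (r + 1) (r + 1)" using gram_carrier[of S "ext_family n xs"]
    by (simp add: M_def ext_length len)
  have G: "Gm S xs i j = (if i = 0 \<and> j = 0 then 1 else 0)" if "i < r" "j < r" for i j
    using Gm_units[OF Sc rn' that] Sij[OF that] by (simp add: xs_def)
  define f where "f i = (if i = 0 \<or> i = r then 1 else (0::bit))" for i
  have prod: "M $$ (i, j) = f i * f j" if "i < r + 1" "j < r + 1" for i j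
  proof -
    have ij: "i \<le> r" "j \<le> r" using that by auto
    have s1: "(\<Sum>l<r. Gm S xs k l) = (if k = 0 then 1 else 0)" if "k < r" for k
    proof -
      have "(\<Sum>l<r. Gm S xs k l) = (\<Sum>l<r. if l = 0 then (if k = 0 then 1 else 0) else 0)"
        using that by (intro sum.cong refl) (simp add: G)
      also have "\<dots> = (if k = 0 then 1 else 0)" using r2 by (subst sum.delta) auto
      finally show ?thesis .
    qed
    have s2: "(\<Sum>k<r. Gm S xs k l) = (if l = 0 then 1 else 0)" if "l < r" for l
    proof -
      have "(\<Sum>k<r. Gm S xs k l) = (\<Sum>k<r. if k = 0 then (if l = 0 then 1 else 0) else 0)"
        using that by (intro sum.cong refl) (simp add: G)
      also have "\<dots> = (if l = 0 then 1 else 0)" using r2 by (subst sum.delta) auto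
      finally show ?thesis .
    qed
    have s3: "(\<Sum>k<r. \<Sum>l<r. Gm S xs k l) = 1"
    proof -
      have "(\<Sum>k<r. \<Sum>l<r. Gm S xs k l) = (\<Sum>k<r. if k = 0 then 1 else 0)"
        by (intro sum.cong refl) (simp add: s1)
      also have "\<dots> = 1" using r2 by (subst sum.delta) auto
      finally show ?thesis .
    qed
    have "M $$ (i, j) = Gext (Gm S xs) r i j" unfolding M_def by (rule gram_entry[OF Sc xc len ij])
    also have "\<dots> = f i * f j"
    proof (cases "i < r"; cases "j < r")
      assume "i < r" "j < r" then show ?thesis using r2 by (simp add: Gext_def G f_def)
    next
      assume a: "i < r" "\<not> j < r" then have "j = r" using ij by simp
      then show ?thesis using a r2 s1[of i] by (simp add: Gext_def f_def)
    next
      assume a: "\<not> i < r" "j < r" then have "i = r" using ij by simp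
      then show ?thesis using a r2 s2[of j] by (simp add: Gext_def f_def)
    next
      assume a: "\<not> i < r" "\<not> j < r" then have "i = r" "j = r" using ij by simp_all
      then show ?thesis using a r2 s3 by (simp add: Gext_def f_def)
    qed
    finally show ?thesis .
  qed
  interpret V: vec_space "TYPE(bit)" "r + 1" .
  have le: "V.rank M \<le> 1" by (rule V.rank_le_1_product_entries[OF Mc, of f f]) (use prod Mc in auto)
  have "col M 0 \<noteq> 0\<^sub>v (r + 1)"
  proof
    assume "col M 0 = 0\<^sub>v (r + 1)"
    then have "col M 0 $ 0 = 0" by simp
    moreover have "col M 0 $ 0 = 1" using Mc prod[of 0 0] by (simp add: f_def)
    ultimately show False by simp
  qed
  then have ge: "V.rank M \<ge> 1" using rank_ge1[OF Mc, of 0] by simp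
  have "config n r A B S xs \<and> vec_space.rank (r + 1) (gram S (ext_family n xs)) = 1"
  proof
    show "config n r A B S xs" using cf unfolding xs_def .
    show "vec_space.rank (r + 1) (gram S (ext_family n xs)) = 1" using le ge unfolding M_def by linarith
  qed
  then show ?thesis by blast
qed

definition sig2 :: "nat \<Rightarrow> nat" where
  "sig2 i = (if i < 2 then i + 2 else if i < 4 then i - 2 else i)"

lemma sig2_inv: "4 \<le> n \<Longrightarrow> i < n \<Longrightarrow> sig2 i < n \<and> sig2 (sig2 i) = i"
  unfolding sig2_def by auto

lemma cons_G0:
  assumes n4: "4 \<le> n"
  shows "\<exists>A B Ainv xs. config n 2 A B Ainv xs \<and> vec_space.rank (2 + 1) (gram Ainv (ext_family n xs)) \<noteq> 1"
proof -
  define S where "S = perm_mat n sig2"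
  have inv: "\<And>i. i < n \<Longrightarrow> sig2 i < n \<and> sig2 (sig2 i) = i" using sig2_inv[OF n4] by blast
  have P2: "transpose_mat S = S" unfolding S_def using perm_mat_props(2)[of n sig2] inv by blast
  have P3: "y = 0\<^sub>v n" if "y \<in> carrier_vec n" "S *\<^sub>v y = 0\<^sub>v n" for y
    using perm_mat_props(3)[of n sig2 y] inv that unfolding S_def by blast
  have ev2: "even (2::nat)" by simp
  have Sc: "S \<in> carrier_mat n n" by (simp add: S_def perm_mat_def)
  have rn': "2 \<le> n" using n4 by simp
  have Sij: "S $$ (i, j) = 0" if "i < 2" "j < 2" for i j
    using that n4 by (auto simp: S_def perm_mat_def sig2_def)
  have Nk: "u i = 0" if h: "\<And>i. i < 2 \<Longrightarrow> (\<Sum>j<2. S $$ (i, j) * u j) = u i + (\<Sum>j<2. u j)" and i: "i < 2" for u :: "nat \<Rightarrow> bit" and i :: nat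
  proof -
    have "0 = u 0 + (u 0 + u 1)" "0 = u 1 + (u 0 + u 1)"
      using h[of 0] h[of 1] Sij by (simp_all add: numeral_2_eq_2)
    then have "u 0 = 0" "u 1 = 0" by (simp_all add: add.assoc[symmetric])
    then show ?thesis using i by (auto simp: less_2_cases_iff)
  qed
  have "\<exists>A B. config n 2 A B S (map (unit_vec n) [0..<2])"
  proof (rule cons[OF Sc P2 P3 rn' ev2])
    fix u :: "nat \<Rightarrow> bit" and i :: nat
    assume "\<And>i. i < 2 \<Longrightarrow> (\<Sum>j<2. S $$ (i, j) * u j) = u i + (\<Sum>j<2. u j)" "i < 2"
    then show "u i = 0" by (rule Nk)
  qed
  then obtain A B where cf: "config n 2 A B S (map (unit_vec n) [0..<2])" by blast
  define xs :: "bit vec list" where "xs = map (unit_vec n) [0..<2]"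
  have xc: "set xs \<subseteq> carrier_vec n" and len: "length xs = 2" unfolding xs_def by auto
  define M where "M = gram S (ext_family n xs)"
  have Mc: "M \<in> carrier_mat (2 + 1) (2 + 1)" using gram_carrier[of S "ext_family n xs"]
    by (simp add: M_def ext_length len)
  have G: "Gm S xs i j = 0" if "i < 2" "j < 2" for i j
    using Gm_units[OF Sc rn' that] Sij[OF that] by (simp add: xs_def)
  have "M = 0\<^sub>m (2 + 1) (2 + 1)"
  proof (rule eq_matI)
    fix i j assume "i < dim_row (0\<^sub>m (2 + 1) (2 + 1) :: bit mat)" "j < dim_col (0\<^sub>m (2 + 1) (2 + 1) :: bit mat)"
    then have ij: "i \<le> 2" "j \<le> 2" by auto
    have "M $$ (i, j) = Gext (Gm S xs) 2 i j" unfolding M_def by (rule gram_entry[OF Sc xc len ij])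
    also have "\<dots> = 0" using ij by (simp add: Gext_def G)
    finally show "M $$ (i, j) = 0\<^sub>m (2 + 1) (2 + 1) $$ (i, j)" using ij by simp
  qed (use Mc in auto)
  then have "vec_space.rank (2 + 1) M = 0" using vec_space.rank_0I by metis
  then have "config n 2 A B S xs \<and> vec_space.rank (2 + 1) (gram S (ext_family n xs)) \<noteq> 1"
    using cf unfolding M_def xs_def by simp
  then show ?thesis by blast
qed

(* ---- from L9.thy ---- *)

definition supp :: "nat \<Rightarrow> nat \<Rightarrow> nat set" where
  "supp r i = (if r \<le> i then {i} else if i = 0 then {1, 3} else if i = 1 then {0}
     else if i = 2 then {2, 3} else if i = 3 then {0, 2} else if even i then {i, Suc i} else {i - 1})"

lemma supp_fin: "finite (supp r i)" by (simp add: supp_def)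

lemma supp_sub:
  assumes r4: "4 \<le> r" and ev: "even r" and i: "i < m" and rm: "r \<le> m"
  shows "supp r i \<subseteq> {..<m}"
proof (cases "r \<le> i")
  case True then show ?thesis using i by (simp add: supp_def)
next
  case False
  then have ir: "i < r" by simp
  have "even i \<Longrightarrow> Suc i < r" using ir ev by (metis Suc_lessI even_Suc)
  then show ?thesis using ir rm r4 by (auto simp: supp_def)
qed

lemma supp_sub_r:
  assumes r4: "4 \<le> r" and ev: "even r" and i: "i < r"
  shows "supp r i \<subseteq> {..<r}"
  using supp_sub[OF r4 ev i order.refl] .

lemma supp_sym:
  assumes r4: "4 \<le> r" and ev: "even r" and i: "i < n" and j: "j < n"
  shows "j \<in> supp r i \<longleftrightarrow> i \<in> supp r j"
proof -
  have odd_case: "supp r k = {k - 1}" if "odd k" "4 < k" "k < r" for k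
    using that by (auto simp: supp_def)
  have even_case: "supp r k = {k, Suc k}" if "even k" "4 \<le> k" "k < r" for k
    using that by (auto simp: supp_def)
  have sucr: "Suc k < r" if "even k" "k < r" for k using that ev by (metis Suc_lessI even_Suc)
  show ?thesis
  proof (cases "r \<le> i \<or> r \<le> j")
    case True
    then show ?thesis using r4 sucr[of i] sucr[of j] by (auto simp: supp_def split: if_splits)
  next
    case False
    then have ir: "i < r" and jr: "j < r" by auto
    consider "i < 4" | "4 \<le> i" "even i" | "4 < i" "odd i"
      by (metis le_neq_implies_less not_le odd_numeral even_numeral)
    then show ?thesis
    proof cases
      case 1
      then consider "i = 0" | "i = 1" | "i = 2" | "i = 3" by linarith
      then show ?thesis using jr r4 by cases (auto simp: supp_def split: if_splits elim: oddE)
    next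
      case 2
      have si: "supp r (Suc i) = {i}" using odd_case[of "Suc i"] 2 sucr[OF 2(2) ir] by simp
      show ?thesis
      proof
        assume "j \<in> supp r i" then have "j = i \<or> j = Suc i" using even_case[OF 2(2,1) ir] by simp
        then show "i \<in> supp r j" using even_case[OF 2(2,1) ir] si by auto
      next
        assume h: "i \<in> supp r j"
        consider "j < 4" | "4 \<le> j" "even j" | "4 < j" "odd j"
          by (metis le_neq_implies_less not_le odd_numeral even_numeral)
        then show "j \<in> supp r i"
        proof cases
          case 1 then show ?thesis using h 2 by (auto simp: supp_def split: if_splits elim: oddE)
        next
          case 3 then show ?thesis using h odd_case[OF 3(2,1) jr] even_case[OF 2(2,1) ir] by auto
        next
          case 4: 2 then show ?thesis using h even_case[OF 4(2,1) jr] even_case[OF 2(2,1) ir] 2 by auto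
        qed
      qed
    next
      case 3
      have si: "supp r i = {i - 1}" using odd_case[OF 3(2,1) ir] .
      have e: "even (i - 1)" "4 \<le> i - 1" "i - 1 < r" using 3 ir by auto
      have sim: "supp r (i - 1) = {i - 1, i}" using even_case[OF e] 3 by simp
      show ?thesis
      proof
        assume "j \<in> supp r i" then show "i \<in> supp r j" using si sim by simp
      next
        assume h: "i \<in> supp r j"
        consider "j < 4" | "4 \<le> j" "even j" | "4 < j" "odd j"
          by (metis le_neq_implies_less not_le odd_numeral even_numeral)
        then show "j \<in> supp r i"
        proof cases
          case 1 then show ?thesis using h 3 by (auto simp: supp_def split: if_splits elim: oddE)
        next
          case 2 then show ?thesis using h even_case[OF 2(2,1) jr] si 3 by auto
        next
          case 4: 3 then show ?thesis using h odd_case[OF 4(2,1) jr] si 3 by auto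
        qed
      qed
    qed
  qed
qed

lemma sum_ind:
  fixes f :: "nat \<Rightarrow> bit"
  assumes "finite T" "T \<subseteq> {..<m}"
  shows "(\<Sum>j<m. (if j \<in> T then 1 else 0) * f j) = (\<Sum>j\<in>T. f j)"
proof -
  have "(\<Sum>j<m. (if j \<in> T then 1 else 0) * f j) = (\<Sum>j<m. if j \<in> T then f j else 0)"
    by (intro sum.cong) auto
  also have "\<dots> = (\<Sum>j\<in>{..<m} \<inter> T. f j)" by (simp add: sum.inter_restrict)
  also have "{..<m} \<inter> T = T" using assms by auto
  finally show ?thesis .
qed

(* ---- from L10.thy ---- *)

definition S3 :: "nat \<Rightarrow> nat \<Rightarrow> bit mat" where
  "S3 r n = mat n n (\<lambda>(i, j). if j \<in> supp r i then 1 else 0)"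

lemma supp_vals:
  assumes "4 \<le> r"
  shows "supp r 0 = {1, 3}" "supp r 1 = {0}" "supp r 2 = {2, 3}" "supp r 3 = {0, 2}"
  using assms by (auto simp: supp_def)

lemma supp_pair:
  assumes "4 \<le> e" "even e" "e < r" "even r"
  shows "supp r e = {e, Suc e}" "supp r (Suc e) = {e}"
proof -
  have "Suc e < r" using assms by (metis Suc_lessI even_Suc)
  then show "supp r e = {e, Suc e}" "supp r (Suc e) = {e}" using assms by (auto simp: supp_def)
qed

lemma sum4: fixes u :: "nat \<Rightarrow> bit" shows "(\<Sum>j<4. u j) = u 0 + u 1 + u 2 + u 3"
  by (simp add: eval_nat_numeral)

lemma pair_of:
  assumes "4 \<le> k" "k < r" "even r"
  obtains e where "4 \<le> e" "even e" "e < r" "k = e \<or> k = Suc e"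
proof (cases "even k")
  case True then show ?thesis using that assms by blast
next
  case False
  then have "4 \<le> k - 1" "even (k - 1)" "k - 1 < r" "k = Suc (k - 1)" using assms
    by (auto elim: oddE)
  then show ?thesis using that by blast
qed

lemma S3_facts:
  assumes r4: "4 \<le> r" and ev: "even r" and rn: "r \<le> n"
  shows "S3 r n \<in> carrier_mat n n" "transpose_mat (S3 r n) = S3 r n"
    "\<And>y. y \<in> carrier_vec n \<Longrightarrow> S3 r n *\<^sub>v y = 0\<^sub>v n \<Longrightarrow> y = 0\<^sub>v n"
    "\<And>i j. i < r \<Longrightarrow> j < r \<Longrightarrow> S3 r n $$ (i, j) = (if j \<in> supp r i then 1 else 0)"
    "\<And>i f. i < r \<Longrightarrow> (\<Sum>j<r. S3 r n $$ (i, j) * f j) = (\<Sum>j\<in>supp r i. f j)"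
proof -
  show Sc: "S3 r n \<in> carrier_mat n n" by (simp add: S3_def)
  show "transpose_mat (S3 r n) = S3 r n"
  proof (rule eq_matI)
    fix i j assume "i < dim_row (S3 r n)" "j < dim_col (S3 r n)"
    then have ij: "i < n" "j < n" by (auto simp: S3_def)
    then show "transpose_mat (S3 r n) $$ (i, j) = S3 r n $$ (i, j)"
      using supp_sym[OF r4 ev ij] by (simp add: S3_def)
  qed (auto simp: S3_def)
  show Sij: "\<And>i j. i < r \<Longrightarrow> j < r \<Longrightarrow> S3 r n $$ (i, j) = (if j \<in> supp r i then 1 else 0)"
    using rn by (simp add: S3_def)
  show "\<And>i f. i < r \<Longrightarrow> (\<Sum>j<r. S3 r n $$ (i, j) * f j) = (\<Sum>j\<in>supp r i. f j)"
  proof -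
    fix i and f :: "nat \<Rightarrow> bit" assume i: "i < r"
    have "(\<Sum>j<r. S3 r n $$ (i, j) * f j) = (\<Sum>j<r. (if j \<in> supp r i then 1 else 0) * f j)"
      using i by (intro sum.cong refl) (simp add: Sij)
    also have "\<dots> = (\<Sum>j\<in>supp r i. f j)" by (rule sum_ind[OF supp_fin supp_sub_r[OF r4 ev i]])
    finally show "(\<Sum>j<r. S3 r n $$ (i, j) * f j) = (\<Sum>j\<in>supp r i. f j)" .
  qed
  fix y assume y: "y \<in> carrier_vec n" and h: "S3 r n *\<^sub>v y = 0\<^sub>v n"
  have R: "(\<Sum>j\<in>supp r i. y $ j) = 0" if i: "i < n" for i
  proof -
    have "(S3 r n *\<^sub>v y) $ i = (\<Sum>j<n. S3 r n $$ (i, j) * y $ j)"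
      using i y Sc by (simp add: mult_mat_vec_def scalar_prod_def row_def atLeast0LessThan)
    also have "\<dots> = (\<Sum>j<n. (if j \<in> supp r i then 1 else 0) * y $ j)"
      using i by (intro sum.cong refl) (simp add: S3_def)
    also have "\<dots> = (\<Sum>j\<in>supp r i. y $ j)" by (rule sum_ind[OF supp_fin supp_sub[OF r4 ev i rn]])
    finally show ?thesis using h i by simp
  qed
  have yk: "y $ k = 0" if k: "k < n" for k
  proof -
    consider "r \<le> k" | "k < 4" | "4 \<le> k" "k < r" by linarith
    then show ?thesis
    proof cases
      case 1 then show ?thesis using R[OF k] by (simp add: supp_def)
    next
      case 2
      have "y $ 1 + y $ 3 = 0" "y $ 0 = 0" "y $ 2 + y $ 3 = 0" "y $ 0 + y $ 2 = 0"
        using R[of 0] R[of 1] R[of 2] R[of 3] supp_vals[OF r4] r4 rn by auto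
      then have "y $ 0 = 0" "y $ 1 = 0" "y $ 2 = 0" "y $ 3 = 0"
        by (auto simp: bit_eq_iff_add)
      then show ?thesis using 2 by (auto simp: less_Suc_eq eval_nat_numeral)
    next
      case 3
      obtain e where e: "4 \<le> e" "even e" "e < r" "k = e \<or> k = Suc e" using pair_of[OF 3 ev] by blast
      have se: "Suc e < r" using e ev by (metis Suc_lessI even_Suc)
      have "y $ e = 0" using R[of "Suc e"] supp_pair[OF e(1-3) ev] se rn by simp
      moreover have "y $ e + y $ Suc e = 0" using R[of e] supp_pair[OF e(1-3) ev] e rn by simp
      ultimately show ?thesis using e(4) by auto
    qed
  qed
  show "y = 0\<^sub>v n" using y yk by (intro eq_vecI) auto
qed

lemma S3_Nk:
  assumes r4: "4 \<le> r" and ev: "even r" and rn: "r \<le> n"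
    and h: "\<And>i. i < r \<Longrightarrow> (\<Sum>j<r. S3 r n $$ (i, j) * u j) = u i + (\<Sum>j<r. u j)"
    and i: "i < r"
  shows "u i = (0::bit)"
proof -
  define \<sigma> where "\<sigma> = (\<Sum>j<r. u j)"
  have H: "(\<Sum>j\<in>supp r k. u j) = u k + \<sigma>" if "k < r" for k
    using h[OF that] S3_facts(5)[OF r4 ev rn that] by (simp add: \<sigma>_def)
  have "u 1 + u 3 = u 0 + \<sigma>" "u 0 = u 1 + \<sigma>" "u 2 + u 3 = u 2 + \<sigma>" "u 0 + u 2 = u 3 + \<sigma>"
    using H[of 0] H[of 1] H[of 2] H[of 3] supp_vals[OF r4] r4 by auto
  then have q: "\<sigma> = 0" "u 3 = 0" "u 1 = u 0" "u 2 = u 0"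
    by (cases "u 0"; cases "u 1"; cases "u 2"; cases "u 3"; cases \<sigma>; simp)+
  have hi: "u k = 0" if k: "4 \<le> k" "k < r" for k
  proof -
    obtain e where e: "4 \<le> e" "even e" "e < r" "k = e \<or> k = Suc e" using pair_of[OF k ev] by blast
    have se: "Suc e < r" using e ev by (metis Suc_lessI even_Suc)
    have a: "u e = u (Suc e)" using H[OF se] supp_pair[OF e(1-3) ev] q(1) by simp
    have b: "u e + u (Suc e) = u e" using H[OF e(3)] supp_pair[OF e(1-3) ev] q(1) by simp
    have "u (Suc e) = 0" using b by (cases "u e"; cases "u (Suc e)") auto
    then show ?thesis using a e(4) by auto
  qed
  have "\<sigma> = (\<Sum>j<4. u j)" unfolding \<sigma>_def
    by (rule sum.mono_neutral_right) (use r4 hi in auto)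
  then have "\<sigma> = u 0" using q by (simp add: sum4)
  then have u0: "u 0 = 0" using q by simp
  show ?thesis
  proof (cases "i < 4")
    case True
    then have "i = 0 \<or> i = 1 \<or> i = 2 \<or> i = 3" by auto
    then show ?thesis using q u0 by auto
  next
    case False then show ?thesis using hi i by simp
  qed
qed

lemma cons_S3:
  assumes r4: "4 \<le> r" and ev: "even r" and rn: "r \<le> n"
  shows "\<exists>A B Ainv xs. config n r A B Ainv xs \<and> vec_space.rank (r + 1) (gram Ainv (ext_family n xs)) \<noteq> 1"
proof -
  define S where "S = S3 r n"
  note F = S3_facts[OF r4 ev rn, folded S_def]
  have "\<exists>A B. config n r A B S (map (unit_vec n) [0..<r])"
  proof (rule cons[OF F(1) F(2) F(3) rn ev])
    fix u :: "nat \<Rightarrow> bit" and i :: nat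
    assume "\<And>i. i < r \<Longrightarrow> (\<Sum>j<r. S $$ (i, j) * u j) = u i + (\<Sum>j<r. u j)" "i < r"
    then show "u i = 0" unfolding S_def by (rule S3_Nk[OF r4 ev rn])
  qed
  then obtain A B where cf: "config n r A B S (map (unit_vec n) [0..<r])" by blast
  define xs :: "bit vec list" where "xs = map (unit_vec n) [0..<r]"
  have xc: "set xs \<subseteq> carrier_vec n" and len: "length xs = r" unfolding xs_def by auto
  define M where "M = gram S (ext_family n xs)"
  have Mc: "M \<in> carrier_mat (r + 1) (r + 1)" using gram_carrier[of S "ext_family n xs"]
    by (simp add: M_def ext_length len)
  have Me: "M $$ (i, j) = (if j \<in> supp r i then 1 else 0)" if "i < r" "j < r" for i j
  proof -
    have "M $$ (i, j) = Gext (Gm S xs) r i j" unfolding M_def by (rule gram_entry[OF F(1) xc len]) (use that in auto)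
    also have "\<dots> = Gm S xs i j" using that by (simp add: Gext_def)
    also have "\<dots> = S $$ (i, j)" using Gm_units[OF F(1) rn that] by (simp add: xs_def)
    finally show ?thesis using F(4)[OF that] by simp
  qed
  have m: "M $$ (0, 0) = 0" "M $$ (1, 0) = 1" "M $$ (0, 1) = 1" "M $$ (1, 1) = 0"
    using Me[of 0 0] Me[of 1 0] Me[of 0 1] Me[of 1 1] supp_vals[OF r4] r4 by auto
  have c0: "col M 0 $ 0 = 0" "col M 0 $ 1 = 1" using m Mc r4 by auto
  have c1: "col M 1 $ 0 = 1" "col M 1 $ 1 = 0" using m Mc r4 by auto
  have r1: "1 < r + 1" "0 < r + 1" using r4 by auto
  have nz0: "col M 0 \<noteq> 0\<^sub>v (r + 1)"
  proof
    assume "col M 0 = 0\<^sub>v (r + 1)"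
    then have "col M 0 $ 1 = 0" using r1 by simp
    then show False using c0 by simp
  qed
  have nz1: "col M 1 \<noteq> 0\<^sub>v (r + 1)"
  proof
    assume "col M 1 = 0\<^sub>v (r + 1)"
    then have "col M 1 $ 0 = 0" using r1 by simp
    then show False using c1 by simp
  qed
  have ne: "col M 0 \<noteq> col M 1"
  proof
    assume "col M 0 = col M 1"
    then have "col M 0 $ 0 = col M 1 $ 0" by simp
    then show False using c0 c1 by simp
  qed
  have "vec_space.rank (r + 1) M \<ge> 2" by (rule rank_ge2[OF Mc r1(2) r1(1) nz0 nz1 ne])
  then have "config n r A B S xs \<and> vec_space.rank (r + 1) (gram S (ext_family n xs)) \<noteq> 1"
    using cf unfolding M_def xs_def by simp
  then show ?thesis by blast
qed


theorem lemma7p2: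
  fixes n r :: nat
  assumes "n \<ge> 2" and "even r" and "0 < r" and "r \<le> n"
  shows "((\<exists>A B Ainv xs. config n r A B Ainv xs
            \<and> vec_space.rank (r + 1) (gram Ainv (ext_family n xs)) \<noteq> 1)
           \<longleftrightarrow> (r, n) \<notin> {(2, 2), (2, 3)})
       \<and> ((\<exists>A B Ainv xs. config n r A B Ainv xs
            \<and> vec_space.rank (r + 1) (gram Ainv (ext_family n xs)) = 1)
           \<longleftrightarrow> r \<le> (n + 1) div 2)"
proof -
  have r2: "2 \<le> r" using assms(2,3) by (auto elim!: evenE)
  have P1: "(\<exists>A B Ainv xs. config n r A B Ainv xs
            \<and> vec_space.rank (r + 1) (gram Ainv (ext_family n xs)) \<noteq> 1)
           \<longleftrightarrow> (r, n) \<notin> {(2, 2), (2, 3)}"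
  proof
    assume "\<exists>A B Ainv xs. config n r A B Ainv xs \<and> vec_space.rank (r + 1) (gram Ainv (ext_family n xs)) \<noteq> 1"
    then obtain A B Ainv xs where h: "config n r A B Ainv xs" "vec_space.rank (r + 1) (gram Ainv (ext_family n xs)) \<noteq> 1"
      by blast
    show "(r, n) \<notin> {(2, 2), (2, 3)}"
    proof
      assume "(r, n) \<in> {(2, 2), (2, 3)}"
      then have r: "r = 2" and n: "n \<le> 3" by auto
      show False using nec_r2[of n A B Ainv xs] h n unfolding r by blast
    qed
  next
    assume nb: "(r, n) \<notin> {(2, 2), (2, 3)}"
    show "\<exists>A B Ainv xs. config n r A B Ainv xs \<and> vec_space.rank (r + 1) (gram Ainv (ext_family n xs)) \<noteq> 1"
    proof (cases "r = 2")
      case True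
      then have n4: "4 \<le> n" using nb assms(4) by auto
      show ?thesis unfolding True using cons_G0[OF n4] .
    next
      case False
      have r4: "4 \<le> r" using False r2 assms(2) by (auto elim!: evenE)
      show ?thesis using cons_S3[OF r4 assms(2,4)] .
    qed
  qed
  have P2: "(\<exists>A B Ainv xs. config n r A B Ainv xs
            \<and> vec_space.rank (r + 1) (gram Ainv (ext_family n xs)) = 1)
           \<longleftrightarrow> r \<le> (n + 1) div 2"
  proof
    assume "\<exists>A B Ainv xs. config n r A B Ainv xs \<and> vec_space.rank (r + 1) (gram Ainv (ext_family n xs)) = 1"
    then obtain A B Ainv xs where h: "config n r A B Ainv xs" "vec_space.rank (r + 1) (gram Ainv (ext_family n xs)) = 1"
      by blast
    have "2 * r \<le> n + 1" by (rule nec_rank1[OF h(1) assms(3) h(2)])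
    then show "r \<le> (n + 1) div 2" by linarith
  next
    assume "r \<le> (n + 1) div 2"
    then have "2 * r - 1 \<le> n" by linarith
    then show "\<exists>A B Ainv xs. config n r A B Ainv xs \<and> vec_space.rank (r + 1) (gram Ainv (ext_family n xs)) = 1"
      using cons_rank1[OF r2 assms(2)] by blast
  qed
  show ?thesis using P1 P2 by blast
qed

end
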